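(* Let $k\ge 1$ and let $G$ be a finite abelian group with prime-power decomposition $G\cong\bigoplus_i (\mathbb{Z}_{p_i^{r_i}})^{d_i}$, where the pairs $(p_i,r_i)$ are pairwise distinct, $p_i$ prime, $r_i\ge 1$, $d_i\ge 1$. Suppose at least one of the following holds: (1) for every $i$ with $p_i=2$ or $p_i=3$ one has $d_i\ge 2$ (no condition for $p_i>3$; $k$ arbitrary); (2) no $p_i$ equals $2$, and $k$ is even; (3) for every $i$ with $p_i=2$ one has $d_i\ge 2$, and $k=4s$ for some positive integer $s$. Then the restricted wreath product $G\wr\mathbb{Z}^k$ admits an automorphism $\varphi$ with $R(\varphi)<\infty$; i.e. $G\wr\mathbb{Z}^k$ does not have the $R_\infty$ property.
   Context: For a group $\Gamma$ and an endomorphism $\varphi$, elements $x,y\in\Gamma$ are $\varphi$-conjugate (twisted conjugate) if $y=gx\varphi(g^{-1})$ for some $g\in\Gamma$; the equivalence classes are Reidemeister classes and their number $R(\varphi)\in\{1,2,\dots\}\cup\{\infty\}$ is the Reidemeister number. A group has the $R_\infty$ property if every automorphism has $R(\varphi)=\infty$. The restricted wreath product is $G\wr\mathbb{Z}^k=\Sigma\rtimes_\alpha\mathbb{Z}^k$, where $\Sigma=\bigoplus_{x\in\mathbb{Z}^k}G_x$ with each $G_x$ a copy of $G$ (for $g\in G$, $g_x$ denotes $g$ in $G_x$), and $\alpha(x)(g_y)=g_{x+y}$. *)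

theory Defs
  imports "HOL-Algebra.Algebra" "HOL-Library.Extended_Nat"
begin

definition Zk :: "nat \<Rightarrow> (nat \<Rightarrow> int) set" where
  "Zk k = {x. \<forall>i\<ge>k. x i = 0}"

text \<open>Restricted wreath product G wr Z^k = Sigma \<rtimes>_alpha Z^k.
  An element of Sigma = direct sum of copies G_x (x in Z^k) is a finitely supported
  function sigma : Z^k -> carrier G (extended by the unit outside Z^k).
  alpha(x) shifts: (alpha(x) tau)(z) = tau(z - x), so alpha(x)(g_y) = g_(x+y).\<close>
definition wreath_Zk :: "('a, 'b) monoid_scheme \<Rightarrow> nat \<Rightarrow> (((nat \<Rightarrow> int) \<Rightarrow> 'a) \<times> (nat \<Rightarrow> int)) monoid" where
  "wreath_Zk G k =
     \<lparr>carrier = {(\<sigma>, x). x \<in> Zk k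
                   \<and> (\<forall>z\<in>Zk k. \<sigma> z \<in> carrier G)
                   \<and> (\<forall>z. z \<notin> Zk k \<longrightarrow> \<sigma> z = \<one>\<^bsub>G\<^esub>)
                   \<and> finite {z. \<sigma> z \<noteq> \<one>\<^bsub>G\<^esub>}},
      monoid.mult = (\<lambda>(\<sigma>, x) (\<tau>, y). (\<lambda>z. \<sigma> z \<otimes>\<^bsub>G\<^esub> \<tau> (\<lambda>i. z i - x i), \<lambda>i. x i + y i)),
      one = (\<lambda>z. \<one>\<^bsub>G\<^esub>, \<lambda>i. 0)\<rparr>"

definition twisted_conj :: "('a, 'b) monoid_scheme \<Rightarrow> ('a \<Rightarrow> 'a) \<Rightarrow> ('a \<times> 'a) set" where
  "twisted_conj G \<phi> = {(x, y). x \<in> carrier G \<and> y \<in> carrier G \<and>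
      (\<exists>g\<in>carrier G. y = g \<otimes>\<^bsub>G\<^esub> x \<otimes>\<^bsub>G\<^esub> \<phi> (inv\<^bsub>G\<^esub> g))}"

definition reidemeister_classes :: "('a, 'b) monoid_scheme \<Rightarrow> ('a \<Rightarrow> 'a) \<Rightarrow> 'a set set" where
  "reidemeister_classes G \<phi> = carrier G // twisted_conj G \<phi>"

definition reidemeister_number :: "('a, 'b) monoid_scheme \<Rightarrow> ('a \<Rightarrow> 'a) \<Rightarrow> enat" where
  "reidemeister_number G \<phi> =
     (if finite (reidemeister_classes G \<phi>) then enat (card (reidemeister_classes G \<phi>)) else \<infinity>)"

definition prime_power_group :: "(nat \<times> nat \<times> nat) list \<Rightarrow> (nat \<times> nat \<Rightarrow> int) monoid" where
  "prime_power_group ds =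
     product_group {(i, j). i < length ds \<and> j < snd (snd (ds ! i))}
       (\<lambda>(i, j). integer_mod_group (fst (ds ! i) ^ fst (snd (ds ! i))))"

end

theory Submission
  imports Defs
begin

lemma Zk_add[intro]: "x \<in> Zk k \<Longrightarrow> y \<in> Zk k \<Longrightarrow> (\<lambda>i. x i + y i) \<in> Zk k"
  by (simp add: Zk_def)
lemma Zk_diff[intro]: "x \<in> Zk k \<Longrightarrow> y \<in> Zk k \<Longrightarrow> (\<lambda>i. x i - y i) \<in> Zk k"
  by (simp add: Zk_def)
lemma Zk_uminus[intro]: "x \<in> Zk k \<Longrightarrow> (\<lambda>i. - x i) \<in> Zk k"
  by (simp add: Zk_def)
lemma Zk_zero[intro, simp]: "(\<lambda>i. 0) \<in> Zk k"
  by (simp add: Zk_def)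
lemma Zk_diff_iff: "x \<in> Zk k \<Longrightarrow> (\<lambda>i. z i - x i) \<in> Zk k \<longleftrightarrow> z \<in> Zk k"
  by (auto simp: Zk_def)

lemma wr_carrier: "(\<sigma>, x) \<in> carrier (wreath_Zk G k) \<longleftrightarrow> x \<in> Zk k
                   \<and> (\<forall>z\<in>Zk k. \<sigma> z \<in> carrier G)
                   \<and> (\<forall>z. z \<notin> Zk k \<longrightarrow> \<sigma> z = \<one>\<^bsub>G\<^esub>)
                   \<and> finite {z. \<sigma> z \<noteq> \<one>\<^bsub>G\<^esub>}"
  by (simp add: wreath_Zk_def)

lemma wr_mult: "(\<sigma>, x) \<otimes>\<^bsub>wreath_Zk G k\<^esub> (\<tau>, y) = (\<lambda>z. \<sigma> z \<otimes>\<^bsub>G\<^esub> \<tau> (\<lambda>i. z i - x i), \<lambda>i. x i + y i)"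
  by (simp add: wreath_Zk_def)

lemma wr_one: "\<one>\<^bsub>wreath_Zk G k\<^esub> = (\<lambda>z. \<one>\<^bsub>G\<^esub>, \<lambda>i. 0)"
  by (simp add: wreath_Zk_def)

lemma wr_val: "group G \<Longrightarrow> (\<sigma>, x) \<in> carrier (wreath_Zk G k) \<Longrightarrow> \<sigma> z \<in> carrier G"
  by (cases "z \<in> Zk k") (auto simp: wr_carrier group.is_monoid monoid.one_closed)

lemma (in group) wr_group: "group (wreath_Zk G k)"
proof (rule groupI)
  fix a b assume a: "a \<in> carrier (wreath_Zk G k)" and b: "b \<in> carrier (wreath_Zk G k)"
  obtain \<sigma> x where ax: "a = (\<sigma>, x)" by force
  obtain \<tau> y where bx: "b = (\<tau>, y)" by force
  have sv: "\<And>z. \<sigma> z \<in> carrier G" "\<And>z. \<tau> z \<in> carrier G" using a b ax bx wr_val[OF is_group] by blast+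
  have x: "x \<in> Zk k" and y: "y \<in> Zk k" using a b ax bx by (auto simp: wr_carrier)
  have fs: "finite {z. \<sigma> z \<noteq> \<one>}" "finite {z. \<tau> z \<noteq> \<one>}" using a b ax bx by (auto simp: wr_carrier)
  have "{z. \<sigma> z \<otimes> \<tau> (\<lambda>i. z i - x i) \<noteq> \<one>} \<subseteq> {z. \<sigma> z \<noteq> \<one>} \<union> (\<lambda>w. \<lambda>i. w i + x i) ` {z. \<tau> z \<noteq> \<one>}"
  proof
    fix z assume "z \<in> {z. \<sigma> z \<otimes> \<tau> (\<lambda>i. z i - x i) \<noteq> \<one>}"
    hence "\<sigma> z \<noteq> \<one> \<or> \<tau> (\<lambda>i. z i - x i) \<noteq> \<one>" using sv by auto
    moreover have "(\<lambda>i. (\<lambda>i. z i - x i) i + x i) \<in> (\<lambda>w. \<lambda>i. w i + x i) ` {z. \<tau> z \<noteq> \<one>}"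
      if "\<tau> (\<lambda>i. z i - x i) \<noteq> \<one>" using that by (intro imageI) simp
    ultimately show "z \<in> {z. \<sigma> z \<noteq> \<one>} \<union> (\<lambda>w. \<lambda>i. w i + x i) ` {z. \<tau> z \<noteq> \<one>}" by auto
  qed
  hence fin: "finite {z. \<sigma> z \<otimes> \<tau> (\<lambda>i. z i - x i) \<noteq> \<one>}"
    by (rule finite_subset) (use fs in auto)
  have out: "\<forall>z. z \<notin> Zk k \<longrightarrow> \<sigma> z \<otimes> \<tau> (\<lambda>i. z i - x i) = \<one>"
    using a b ax bx x by (auto simp: wr_carrier Zk_diff_iff)
  show "a \<otimes>\<^bsub>wreath_Zk G k\<^esub> b \<in> carrier (wreath_Zk G k)"
    unfolding ax bx wr_mult wr_carrier using x y sv fin out by auto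
next
  show "\<one>\<^bsub>wreath_Zk G k\<^esub> \<in> carrier (wreath_Zk G k)"
    by (simp add: wr_one wr_carrier)
next
  fix a b c assume a: "a \<in> carrier (wreath_Zk G k)" and b: "b \<in> carrier (wreath_Zk G k)"
     and c: "c \<in> carrier (wreath_Zk G k)"
  obtain \<sigma> x where ax: "a = (\<sigma>, x)" by force
  obtain \<tau> y where bx: "b = (\<tau>, y)" by force
  obtain \<rho> w where cx: "c = (\<rho>, w)" by force
  have sv: "\<And>z. \<sigma> z \<in> carrier G" "\<And>z. \<tau> z \<in> carrier G" "\<And>z. \<rho> z \<in> carrier G"
    using a b c ax bx cx wr_val[OF is_group] by blast+
  have e: "\<And>z. (\<lambda>i. z i - (x i + y i)) = (\<lambda>i. (\<lambda>i. z i - x i) i - y i)" by (auto simp: algebra_simps)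
  show "a \<otimes>\<^bsub>wreath_Zk G k\<^esub> b \<otimes>\<^bsub>wreath_Zk G k\<^esub> c = a \<otimes>\<^bsub>wreath_Zk G k\<^esub> (b \<otimes>\<^bsub>wreath_Zk G k\<^esub> c)"
    unfolding ax bx cx wr_mult e using sv by (auto simp: m_assoc add.assoc)
next
  fix a assume a: "a \<in> carrier (wreath_Zk G k)"
  obtain \<sigma> x where ax: "a = (\<sigma>, x)" by force
  have sv: "\<And>z. \<sigma> z \<in> carrier G" using a ax wr_val[OF is_group] by blast+
  show "\<one>\<^bsub>wreath_Zk G k\<^esub> \<otimes>\<^bsub>wreath_Zk G k\<^esub> a = a"
    unfolding ax wr_one wr_mult using sv by simp
next
  fix a assume a: "a \<in> carrier (wreath_Zk G k)"
  obtain \<sigma> x where ax: "a = (\<sigma>, x)" by force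
  have sv: "\<And>z. \<sigma> z \<in> carrier G" using a ax wr_val[OF is_group] by blast+
  have x: "x \<in> Zk k" and out: "\<forall>z. z \<notin> Zk k \<longrightarrow> \<sigma> z = \<one>" and fs: "finite {z. \<sigma> z \<noteq> \<one>}"
    using a ax by (auto simp: wr_carrier)
  define b where "b = (\<lambda>z. inv (\<sigma> (\<lambda>i. z i + x i)), \<lambda>i. - x i)"
  have e1: "\<And>z. (\<lambda>i. z i - - x i) = (\<lambda>i. z i + x i)" by auto
  have "{z. inv (\<sigma> (\<lambda>i. z i + x i)) \<noteq> \<one>} \<subseteq> (\<lambda>w. \<lambda>i. w i - x i) ` {z. \<sigma> z \<noteq> \<one>}"
  proof
    fix z assume "z \<in> {z. inv (\<sigma> (\<lambda>i. z i + x i)) \<noteq> \<one>}"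
    hence "\<sigma> (\<lambda>i. z i + x i) \<noteq> \<one>" by auto
    hence "(\<lambda>i. (\<lambda>i. z i + x i) i - x i) \<in> (\<lambda>w. \<lambda>i. w i - x i) ` {z. \<sigma> z \<noteq> \<one>}"
      by (intro imageI) simp
    thus "z \<in> (\<lambda>w. \<lambda>i. w i - x i) ` {z. \<sigma> z \<noteq> \<one>}" by simp
  qed
  hence fin: "finite {z. inv (\<sigma> (\<lambda>i. z i + x i)) \<noteq> \<one>}" by (rule finite_subset) (use fs in auto)
  have o2: "\<forall>z. z \<notin> Zk k \<longrightarrow> inv (\<sigma> (\<lambda>i. z i + x i)) = \<one>"
  proof (intro allI impI)
    fix z assume "z \<notin> Zk k"
    hence "(\<lambda>i. z i + x i) \<notin> Zk k" using x Zk_diff[of "\<lambda>i. z i + x i" k x] by auto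
    thus "inv (\<sigma> (\<lambda>i. z i + x i)) = \<one>" using out by simp
  qed
  have "b \<in> carrier (wreath_Zk G k)" unfolding b_def wr_carrier using x fin o2 sv by auto
  moreover have "b \<otimes>\<^bsub>wreath_Zk G k\<^esub> a = \<one>\<^bsub>wreath_Zk G k\<^esub>"
    unfolding b_def ax wr_mult wr_one using sv by (simp add: e1)
  ultimately show "\<exists>b\<in>carrier (wreath_Zk G k). b \<otimes>\<^bsub>wreath_Zk G k\<^esub> a = \<one>\<^bsub>wreath_Zk G k\<^esub>" by blast
qed


lemma twisted_equiv:
  assumes W: "group W" and h: "\<phi> \<in> hom W W"
  shows "equiv (carrier W) (twisted_conj W \<phi>)"
proof -
  interpret group_hom W W \<phi> using W h by (simp add: group_hom_def group_hom_axioms_def)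
  show ?thesis
  proof (rule equivI)
    show "refl_on (carrier W) (twisted_conj W \<phi>)"
      unfolding refl_on_def twisted_conj_def
      by (auto intro!: bexI[of _ "\<one>\<^bsub>W\<^esub>"])
    show "sym (twisted_conj W \<phi>)"
    proof (rule symI)
      fix a b assume "(a, b) \<in> twisted_conj W \<phi>"
      then obtain g where a: "a \<in> carrier W" and b: "b \<in> carrier W" and g: "g \<in> carrier W"
        and e: "b = g \<otimes>\<^bsub>W\<^esub> a \<otimes>\<^bsub>W\<^esub> \<phi> (inv\<^bsub>W\<^esub> g)"
        unfolding twisted_conj_def by auto
      have "inv\<^bsub>W\<^esub> g \<otimes>\<^bsub>W\<^esub> b \<otimes>\<^bsub>W\<^esub> \<phi> (inv\<^bsub>W\<^esub> (inv\<^bsub>W\<^esub> g)) = a"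
        using a g by (simp add: e hom_inv G.m_assoc G.inv_closed) (simp add: G.m_assoc[symmetric])
      thus "(b, a) \<in> twisted_conj W \<phi>" unfolding twisted_conj_def using a b g
        by (auto intro!: bexI[of _ "inv\<^bsub>W\<^esub> g"])
    qed
    show "trans (twisted_conj W \<phi>)"
    proof (rule transI)
      fix a b c assume "(a, b) \<in> twisted_conj W \<phi>" "(b, c) \<in> twisted_conj W \<phi>"
      then obtain g h where a: "a \<in> carrier W" and b: "b \<in> carrier W" and c: "c \<in> carrier W"
        and g: "g \<in> carrier W" and hh: "h \<in> carrier W"
        and e: "b = g \<otimes>\<^bsub>W\<^esub> a \<otimes>\<^bsub>W\<^esub> \<phi> (inv\<^bsub>W\<^esub> g)"
        and e2: "c = h \<otimes>\<^bsub>W\<^esub> b \<otimes>\<^bsub>W\<^esub> \<phi> (inv\<^bsub>W\<^esub> h)"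
        unfolding twisted_conj_def by auto
      have "c = (h \<otimes>\<^bsub>W\<^esub> g) \<otimes>\<^bsub>W\<^esub> a \<otimes>\<^bsub>W\<^esub> \<phi> (inv\<^bsub>W\<^esub> (h \<otimes>\<^bsub>W\<^esub> g))"
        using a g hh by (simp add: e2 e G.inv_mult_group G.m_assoc)
      thus "(a, c) \<in> twisted_conj W \<phi>" unfolding twisted_conj_def using a c g hh
        by (auto intro!: bexI[of _ "h \<otimes>\<^bsub>W\<^esub> g"])
    qed
    show "twisted_conj W \<phi> \<subseteq> carrier W \<times> carrier W" by (auto simp: twisted_conj_def)
  qed
qed

lemma finite_reidemeister:
  assumes W: "group W" and h: "\<phi> \<in> hom W W" and S: "finite S"
    and cov: "\<And>w. w \<in> carrier W \<Longrightarrow> \<exists>s\<in>S. (w, s) \<in> twisted_conj W \<phi>"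
  shows "reidemeister_number W \<phi> < \<infinity>"
proof -
  have eq: "equiv (carrier W) (twisted_conj W \<phi>)" by (rule twisted_equiv[OF W h])
  have "reidemeister_classes W \<phi> \<subseteq> (\<lambda>s. twisted_conj W \<phi> `` {s}) ` S"
  proof
    fix C assume "C \<in> reidemeister_classes W \<phi>"
    then obtain w where w: "w \<in> carrier W" and C: "C = twisted_conj W \<phi> `` {w}"
      unfolding reidemeister_classes_def quotient_def by auto
    obtain s where s: "s \<in> S" and ws: "(w, s) \<in> twisted_conj W \<phi>" using cov[OF w] by auto
    have "C = twisted_conj W \<phi> `` {s}" using C ws eq by (simp add: equiv_class_eq)
    thus "C \<in> (\<lambda>s. twisted_conj W \<phi> `` {s}) ` S" using s by auto
  qed
  hence "finite (reidemeister_classes W \<phi>)" using S finite_surj by blast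
  thus ?thesis by (simp add: reidemeister_number_def)
qed


fun Pf :: "('a, 'b) monoid_scheme \<Rightarrow> ('a \<Rightarrow> 'a) \<Rightarrow> ((nat \<Rightarrow> int) \<Rightarrow> 'a) \<Rightarrow> ((nat \<Rightarrow> int) \<Rightarrow> (nat \<Rightarrow> int)) \<Rightarrow> nat \<Rightarrow> (nat \<Rightarrow> int) \<Rightarrow> 'a" where
  "Pf G A s T 0 z = \<one>\<^bsub>G\<^esub>"
| "Pf G A s T (Suc m) z = s z \<otimes>\<^bsub>G\<^esub> A (Pf G A s T m (T z))"

lemma (in comm_group) key_alg:
  assumes "a \<in> carrier G" "b \<in> carrier G" "c \<in> carrier G" "e \<in> carrier G" "b \<otimes> e = a \<otimes> c"
  shows "inv a \<otimes> (b \<otimes> inv c) \<otimes> e = \<one>"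
proof -
  have "inv a \<otimes> (b \<otimes> inv c) \<otimes> e = inv a \<otimes> inv c \<otimes> (b \<otimes> e)"
    using assms(1-4) by (simp add: m_ac)
  also have "\<dots> = inv a \<otimes> inv c \<otimes> (a \<otimes> c)" using assms by simp
  also have "\<dots> = (inv a \<otimes> a) \<otimes> (inv c \<otimes> c)" using assms(1-4) by (simp add: m_ac)
  also have "\<dots> = \<one>" using assms(1-4) by simp
  finally show ?thesis .
qed

locale wcore = comm_group G for G (structure) +
  fixes k :: nat and A :: "'a \<Rightarrow> 'a" and n :: nat
    and M Mi :: "(nat \<Rightarrow> int) \<Rightarrow> (nat \<Rightarrow> int)" and Xs :: "(nat \<Rightarrow> int) set"
  assumes finG: "finite (carrier G)"
    and A_iso: "A \<in> iso G G"
    and A_fix: "\<And>g. g \<in> carrier G \<Longrightarrow> (A ^^ n) g = g \<Longrightarrow> g = \<one>"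
    and M_Z: "\<And>x. x \<in> Zk k \<Longrightarrow> M x \<in> Zk k"
    and Mi_Z: "\<And>x. x \<in> Zk k \<Longrightarrow> Mi x \<in> Zk k"
    and MiM: "\<And>x. x \<in> Zk k \<Longrightarrow> Mi (M x) = x"
    and MMi: "\<And>x. x \<in> Zk k \<Longrightarrow> M (Mi x) = x"
    and M_add: "\<And>x y. x \<in> Zk k \<Longrightarrow> y \<in> Zk k \<Longrightarrow> M (\<lambda>i. x i + y i) = (\<lambda>i. M x i + M y i)"
    and X_fin: "finite Xs" and X_sub: "Xs \<subseteq> Zk k"
    and X_cov: "\<And>x. x \<in> Zk k \<Longrightarrow> \<exists>y\<in>Zk k. (\<lambda>i. x i + y i - M y i) \<in> Xs"
    and T_per: "\<And>x0 z. x0 \<in> Zk k \<Longrightarrow> z \<in> Zk k \<Longrightarrow> ((\<lambda>z. Mi (\<lambda>i. z i - x0 i)) ^^ n) z = z"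
begin

abbreviation "W \<equiv> wreath_Zk G k"

lemma A_hom: "A \<in> hom G G" using A_iso by (simp add: iso_def)
lemma A_bij: "bij_betw A (carrier G) (carrier G)" using A_iso by (simp add: iso_def)
lemma A_closed[simp]: "g \<in> carrier G \<Longrightarrow> A g \<in> carrier G" using A_hom by (auto simp: hom_def)
lemma A_mult: "g \<in> carrier G \<Longrightarrow> h \<in> carrier G \<Longrightarrow> A (g \<otimes> h) = A g \<otimes> A h"
  using A_hom by (auto simp: hom_def)
lemma A_one[simp]: "A \<one> = \<one>"
  using A_hom group_hom.hom_one[of G G A] by (simp add: group_hom_def group_hom_axioms_def is_group)
lemma A_inv: "g \<in> carrier G \<Longrightarrow> A (inv g) = inv (A g)"
  using A_hom group_hom.hom_inv[of G G A] by (simp add: group_hom_def group_hom_axioms_def is_group)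

definition "Ai = inv_into (carrier G) A"
lemma Ai_closed[simp]: "g \<in> carrier G \<Longrightarrow> Ai g \<in> carrier G"
  unfolding Ai_def using A_bij by (metis bij_betw_def inv_into_into)
lemma A_Ai[simp]: "g \<in> carrier G \<Longrightarrow> A (Ai g) = g"
  unfolding Ai_def using A_bij by (meson bij_betw_inv_into_right)
lemma Ai_A[simp]: "g \<in> carrier G \<Longrightarrow> Ai (A g) = g"
  unfolding Ai_def using A_bij by (meson bij_betw_inv_into_left)
lemma Ai_one[simp]: "Ai \<one> = \<one>"
  using Ai_A[of \<one>] by simp

lemma M_zero: "M (\<lambda>i. 0) = (\<lambda>i. 0)"
proof
  fix i
  have h: "M (\<lambda>i. 0) = (\<lambda>i. M (\<lambda>i. 0) i + M (\<lambda>i. 0) i)" using M_add[of "\<lambda>i. 0" "\<lambda>i. 0"] by simp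
  from fun_cong[OF h, of i] show "M (\<lambda>i. 0) i = 0" by simp
qed

lemma M_neg: "y \<in> Zk k \<Longrightarrow> M (\<lambda>i. - y i) = (\<lambda>i. - M y i)"
proof
  fix i assume y: "y \<in> Zk k"
  have "M (\<lambda>i. y i + - y i) = (\<lambda>i. M y i + M (\<lambda>i. - y i) i)" using y by (intro M_add) auto
  hence h: "(\<lambda>i. 0) = (\<lambda>i. M y i + M (\<lambda>i. - y i) i)" using M_zero by simp
  from fun_cong[OF h, of i] show "M (\<lambda>i. - y i) i = - M y i" by simp
qed

lemma Mi_diff: "z \<in> Zk k \<Longrightarrow> x \<in> Zk k \<Longrightarrow> Mi (\<lambda>i. z i - M x i) = (\<lambda>i. Mi z i - x i)"
proof -
  assume z: "z \<in> Zk k" and x: "x \<in> Zk k"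
  have u: "(\<lambda>i. Mi z i + - x i) \<in> Zk k" using z x Mi_Z by auto
  have "M (\<lambda>i. Mi z i + - x i) = (\<lambda>i. M (Mi z) i + M (\<lambda>i. - x i) i)"
    using z x Mi_Z by (intro M_add) auto
  also have "\<dots> = (\<lambda>i. z i - M x i)" using M_neg[OF x] MMi[OF z] by simp
  finally have "Mi (\<lambda>i. z i - M x i) = Mi (M (\<lambda>i. Mi z i + - x i))" by simp
  also have "\<dots> = (\<lambda>i. Mi z i + - x i)" by (rule MiM[OF u])
  finally show ?thesis by simp
qed

lemma inj_Mi: "inj_on Mi (Zk k)"
  by (rule inj_onI) (metis MMi)
lemma inj_M: "inj_on M (Zk k)"
  by (rule inj_onI) (metis MiM)

lemma transport_carrier:
  assumes s: "(\<sigma>, x) \<in> carrier W"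
    and F1: "F \<one> = \<one>" and F2: "\<And>g. g \<in> carrier G \<Longrightarrow> F g \<in> carrier G"
    and N1: "\<And>z. z \<in> Zk k \<Longrightarrow> N z \<in> Zk k" and N2: "inj_on N (Zk k)"
    and x': "x' \<in> Zk k"
  shows "(\<lambda>z. if z \<in> Zk k then F (\<sigma> (N z)) else \<one>, x') \<in> carrier W"
proof -
  have fs: "finite {z. \<sigma> z \<noteq> \<one>}" using s by (simp add: wr_carrier)
  have "{z. (if z \<in> Zk k then F (\<sigma> (N z)) else \<one>) \<noteq> \<one>} \<subseteq> N -` {z. \<sigma> z \<noteq> \<one>} \<inter> Zk k"
    using F1 by auto
  moreover have "finite (N -` {z. \<sigma> z \<noteq> \<one>} \<inter> Zk k)" by (rule finite_vimage_IntI[OF fs N2])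
  ultimately have "finite {z. (if z \<in> Zk k then F (\<sigma> (N z)) else \<one>) \<noteq> \<one>}"
    using finite_subset by blast
  moreover have "\<forall>z\<in>Zk k. F (\<sigma> (N z)) \<in> carrier G"
    using s N1 F2 by (simp add: wr_carrier)
  ultimately show ?thesis using x' by (simp add: wr_carrier)
qed

definition "phi = (\<lambda>(\<sigma>, x). (\<lambda>z. if z \<in> Zk k then A (\<sigma> (Mi z)) else \<one>, M x))"
definition "psi = (\<lambda>(\<sigma>, x). (\<lambda>z. if z \<in> Zk k then Ai (\<sigma> (M z)) else \<one>, Mi x))"

lemma phi_closed: "w \<in> carrier W \<Longrightarrow> phi w \<in> carrier W"
proof -
  assume w: "w \<in> carrier W"
  obtain \<sigma> x where wx: "w = (\<sigma>, x)" by force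
  have x: "x \<in> Zk k" using w wx by (simp add: wr_carrier)
  show ?thesis using transport_carrier[of \<sigma> x A Mi "M x"] w x
    by (simp add: phi_def wx Mi_Z M_Z inj_Mi)
qed

lemma psi_closed: "w \<in> carrier W \<Longrightarrow> psi w \<in> carrier W"
proof -
  assume w: "w \<in> carrier W"
  obtain \<sigma> x where wx: "w = (\<sigma>, x)" by force
  have x: "x \<in> Zk k" using w wx by (simp add: wr_carrier)
  show ?thesis using transport_carrier[of \<sigma> x Ai M "Mi x"] w x
    by (simp add: psi_def wx Mi_Z M_Z inj_M)
qed

lemma phi_psi: "w \<in> carrier W \<Longrightarrow> phi (psi w) = w"
proof -
  assume w: "w \<in> carrier W"
  obtain \<sigma> x where wx: "w = (\<sigma>, x)" by force
  have x: "x \<in> Zk k" and sv: "\<forall>z\<in>Zk k. \<sigma> z \<in> carrier G" and out: "\<forall>z. z \<notin> Zk k \<longrightarrow> \<sigma> z = \<one>"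
    using w wx by (auto simp: wr_carrier)
  show ?thesis unfolding wx phi_def psi_def
    using x sv out by (auto intro!: ext simp: Mi_Z MMi)
qed

lemma psi_phi: "w \<in> carrier W \<Longrightarrow> psi (phi w) = w"
proof -
  assume w: "w \<in> carrier W"
  obtain \<sigma> x where wx: "w = (\<sigma>, x)" by force
  have x: "x \<in> Zk k" and sv: "\<forall>z\<in>Zk k. \<sigma> z \<in> carrier G" and out: "\<forall>z. z \<notin> Zk k \<longrightarrow> \<sigma> z = \<one>"
    using w wx by (auto simp: wr_carrier)
  show ?thesis unfolding wx phi_def psi_def
    using x sv out by (auto intro!: ext simp: M_Z MiM)
qed

lemma phi_hom: "phi \<in> hom W W"
proof (rule homI)
  fix a assume "a \<in> carrier W" thus "phi a \<in> carrier W" by (rule phi_closed)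
next
  fix a b assume a: "a \<in> carrier W" and b: "b \<in> carrier W"
  obtain \<sigma> x where ax: "a = (\<sigma>, x)" by force
  obtain \<tau> y where bx: "b = (\<tau>, y)" by force
  have x: "x \<in> Zk k" and y: "y \<in> Zk k" using a b ax bx by (auto simp: wr_carrier)
  have sv: "\<And>z. \<sigma> z \<in> carrier G" "\<And>z. \<tau> z \<in> carrier G"
    using a b ax bx wr_val[OF is_group] by blast+
  have e1: "(\<lambda>z. if z \<in> Zk k then A (\<sigma> (Mi z) \<otimes> \<tau> (\<lambda>i. Mi z i - x i)) else \<one>)
     = (\<lambda>z. (if z \<in> Zk k then A (\<sigma> (Mi z)) else \<one>) \<otimes>
         (if (\<lambda>i. z i - M x i) \<in> Zk k then A (\<tau> (Mi (\<lambda>i. z i - M x i))) else \<one>))"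
  proof
    fix z show "(if z \<in> Zk k then A (\<sigma> (Mi z) \<otimes> \<tau> (\<lambda>i. Mi z i - x i)) else \<one>) =
         (if z \<in> Zk k then A (\<sigma> (Mi z)) else \<one>) \<otimes>
         (if (\<lambda>i. z i - M x i) \<in> Zk k then A (\<tau> (Mi (\<lambda>i. z i - M x i))) else \<one>)"
    proof (cases "z \<in> Zk k")
      case True
      hence "(\<lambda>i. z i - M x i) \<in> Zk k" using x M_Z by auto
      thus ?thesis using True x sv by (simp add: Mi_diff A_mult)
    next
      case False
      hence "(\<lambda>i. z i - M x i) \<notin> Zk k" using x M_Z Zk_diff_iff by blast
      thus ?thesis using False by simp
    qed
  qed
  show "phi (a \<otimes>\<^bsub>W\<^esub> b) = phi a \<otimes>\<^bsub>W\<^esub> phi b"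
    unfolding ax bx wr_mult phi_def using e1 by (simp add: M_add x y wr_mult)
qed

lemma phi_iso: "phi \<in> iso W W"
  unfolding iso_def
  using phi_hom phi_closed psi_closed phi_psi psi_phi
  by (auto intro!: bij_betw_byWitness[where f'=psi])

end

lemma (in group) cg2: "x \<in> carrier G \<Longrightarrow> y \<in> carrier G \<Longrightarrow> (x \<otimes> y) \<otimes> inv y = x"
  by (simp add: m_assoc)

lemma (in comm_group) cg1:
  assumes c: "a \<in> carrier G" "b \<in> carrier G" "p \<in> carrier G" "q \<in> carrier G"
    and e: "a \<otimes> inv p = b \<otimes> inv q"
  shows "a \<otimes> inv b = p \<otimes> inv q"
proof -
  have "a = (a \<otimes> inv p) \<otimes> p" using c by (simp add: m_assoc)
  also have "\<dots> = b \<otimes> inv q \<otimes> p" using e by simp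
  finally have a: "a = b \<otimes> inv q \<otimes> p" .
  have "a \<otimes> inv b = b \<otimes> inv q \<otimes> p \<otimes> inv b" using a by simp
  also have "\<dots> = inv b \<otimes> (b \<otimes> inv q \<otimes> p)" using c by (simp add: m_comm)
  also have "\<dots> = inv q \<otimes> p" using c by (simp add: m_assoc[symmetric])
  also have "\<dots> = p \<otimes> inv q" using c by (simp add: m_comm)
  finally show ?thesis .
qed

lemma (in group) cg3: "a \<in> carrier G \<Longrightarrow> b \<in> carrier G \<Longrightarrow> a \<otimes> inv b = \<one> \<Longrightarrow> a = b"
  by (metis inv_closed inv_equality inv_inv)

context wcore begin

lemma W_group: "group W" by (rule wr_group)

lemma An_closed[simp]: "g \<in> carrier G \<Longrightarrow> (A ^^ m) g \<in> carrier G"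
  by (induction m) auto
lemma An_mult: "g \<in> carrier G \<Longrightarrow> h \<in> carrier G \<Longrightarrow> (A ^^ m) (g \<otimes> h) = (A ^^ m) g \<otimes> (A ^^ m) h"
  by (induction m) (auto simp: A_mult)
lemma An_one[simp]: "(A ^^ m) \<one> = \<one>"
  by (induction m) auto

definition "D g = g \<otimes> inv ((A ^^ n) g)"

lemma D_closed[simp]: "g \<in> carrier G \<Longrightarrow> D g \<in> carrier G" by (simp add: D_def)

lemma D_inj: "inj_on D (carrier G)"
proof (rule inj_onI)
  fix a b assume a: "a \<in> carrier G" and b: "b \<in> carrier G" and e: "D a = D b"
  define c where "c = a \<otimes> inv b"
  have c: "c \<in> carrier G" using a b by (simp add: c_def)
  have "a \<otimes> inv ((A ^^ n) a) = b \<otimes> inv ((A ^^ n) b)" using e by (simp add: D_def)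
  hence "a \<otimes> inv b = (A ^^ n) a \<otimes> inv ((A ^^ n) b)"
    by (rule cg1[OF a b An_closed[OF a] An_closed[OF b]])
  also have "\<dots> = (A ^^ n) c"
  proof -
    have cb: "c \<otimes> b = a" using a b by (simp add: c_def m_assoc)
    have h: "(A ^^ n) c \<otimes> (A ^^ n) b = (A ^^ n) a" using An_mult[OF c b, of n] cb by simp
    have "(A ^^ n) a \<otimes> inv ((A ^^ n) b) = ((A ^^ n) c \<otimes> (A ^^ n) b) \<otimes> inv ((A ^^ n) b)"
      by (simp only: h)
    thus ?thesis using b c by (simp add: cg2)
  qed
  finally have "a \<otimes> inv b = (A ^^ n) c" .
  hence "(A ^^ n) c = c" unfolding c_def by (rule sym)
  hence "c = \<one>" by (rule A_fix[OF c])
  thus "a = b" using a b cg3 unfolding c_def by blast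
qed

lemma D_surj: "D ` carrier G = carrier G"
  by (rule endo_inj_surj[OF finG]) (auto simp: D_inj)

definition "C g = inv_into (carrier G) D g"
lemma C_closed[simp]: "g \<in> carrier G \<Longrightarrow> C g \<in> carrier G"
  unfolding C_def by (rule inv_into_into) (simp add: D_surj)
lemma D_C[simp]: "g \<in> carrier G \<Longrightarrow> D (C g) = g"
  unfolding C_def by (rule f_inv_into_f) (simp add: D_surj)
lemma C_one[simp]: "C \<one> = \<one>"
proof -
  have "D (C \<one>) = \<one>" by simp
  moreover have "D \<one> = \<one>" by (simp add: D_def)
  ultimately have "D (C \<one>) = D \<one>" by simp
  thus ?thesis by (rule inj_onD[OF D_inj]) simp_all
qed

lemma Pf_closed[simp]: "(\<And>z. s z \<in> carrier G) \<Longrightarrow> Pf G A s T m z \<in> carrier G"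
  by (induction m arbitrary: z) auto

lemma Pf_Suc':
  assumes s: "\<And>z. s z \<in> carrier G"
  shows "Pf G A s T (Suc m) z = Pf G A s T m z \<otimes> (A ^^ m) (s ((T ^^ m) z))"
  using s
proof (induction m arbitrary: z)
  case 0 thus ?case by simp
next
  case (Suc m)
  have "Pf G A s T (Suc (Suc m)) z = s z \<otimes> A (Pf G A s T (Suc m) (T z))" by simp
  also have "\<dots> = s z \<otimes> A (Pf G A s T m (T z) \<otimes> (A ^^ m) (s ((T ^^ m) (T z))))"
    using Suc by simp
  also have "\<dots> = (s z \<otimes> A (Pf G A s T m (T z))) \<otimes> (A ^^ Suc m) (s ((T ^^ Suc m) z))"
    using s by (simp add: A_mult m_assoc funpow_swap1[of T, symmetric])
  finally show ?case by simp
qed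

lemma Pf_one: "(\<And>j. j < m \<Longrightarrow> s ((T ^^ j) z) = \<one>) \<Longrightarrow> Pf G A s T m z = \<one>"
proof (induction m arbitrary: z)
  case 0 thus ?case by simp
next
  case (Suc m)
  have "s z = \<one>" using Suc.prems[of 0] by simp
  moreover have "Pf G A s T m (T z) = \<one>"
  proof (rule Suc.IH)
    fix j assume "j < m"
    thus "s ((T ^^ j) (T z)) = \<one>" using Suc.prems[of "Suc j"] by (simp add: funpow_swap1[of T, symmetric])
  qed
  ultimately show ?case by simp
qed

lemma invW1: "y \<in> Zk k \<Longrightarrow> inv\<^bsub>W\<^esub> (\<lambda>z. \<one>, y) = (\<lambda>z. \<one>, \<lambda>i. - y i)"
  by (rule group.inv_equality[OF W_group]) (auto simp: wr_mult wr_one wr_carrier)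

lemma invW2: "(\<tau>, \<lambda>i. 0) \<in> carrier W \<Longrightarrow> inv\<^bsub>W\<^esub> (\<tau>, \<lambda>i. 0) = (\<lambda>z. inv (\<tau> z), \<lambda>i. 0)"
proof (rule group.inv_equality[OF W_group])
  assume t: "(\<tau>, \<lambda>i. 0) \<in> carrier W"
  have sv: "\<And>z. \<tau> z \<in> carrier G" using t wr_val[OF is_group] by blast
  show "(\<lambda>z. inv \<tau> z, \<lambda>i. 0) \<otimes>\<^bsub>W\<^esub> (\<tau>, \<lambda>i. 0) = \<one>\<^bsub>W\<^esub>"
    using sv by (simp add: wr_mult wr_one)
  have "{z. inv \<tau> z \<noteq> \<one>} = {z. \<tau> z \<noteq> \<one>}" using sv by (auto simp: inv_eq_1_iff)
  thus "(\<lambda>z. inv \<tau> z, \<lambda>i. 0) \<in> carrier W" using t sv by (auto simp: wr_carrier)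
qed

lemma step1:
  assumes w: "(\<sigma>, x) \<in> carrier W" and y: "y \<in> Zk k"
  shows "((\<sigma>, x), (\<lambda>z. \<sigma> (\<lambda>i. z i - y i), \<lambda>i. x i + y i - M y i)) \<in> twisted_conj W phi"
proof -
  have sv: "\<And>z. \<sigma> z \<in> carrier G" using w wr_val[OF is_group] by blast
  have g: "(\<lambda>z. \<one>, y) \<in> carrier W" using y by (simp add: wr_carrier)
  have "(\<lambda>z. \<one>, y) \<otimes>\<^bsub>W\<^esub> (\<sigma>, x) \<otimes>\<^bsub>W\<^esub> phi (inv\<^bsub>W\<^esub> (\<lambda>z. \<one>, y))
     = (\<lambda>z. \<sigma> (\<lambda>i. z i - y i), \<lambda>i. x i + y i - M y i)"
    using sv y by (simp add: invW1 phi_def wr_mult M_neg A_one fun_eq_iff)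
  moreover have "(\<lambda>z. \<one>, y) \<otimes>\<^bsub>W\<^esub> (\<sigma>, x) \<otimes>\<^bsub>W\<^esub> phi (inv\<^bsub>W\<^esub> (\<lambda>z. \<one>, y)) \<in> carrier W"
    using g w phi_closed group.inv_closed[OF W_group] monoid.m_closed[OF group.is_monoid[OF W_group]] by simp
  ultimately show ?thesis using w g unfolding twisted_conj_def
    by (intro CollectI case_prodI conjI bexI[of _ "(\<lambda>z. \<one>, y)"]) auto
qed

end

context wcore begin

lemma step2:
  assumes w: "(\<sigma>, x0) \<in> carrier W"
  shows "((\<sigma>, x0), (\<lambda>z. \<one>, x0)) \<in> twisted_conj W phi"
proof -
  have x0: "x0 \<in> Zk k" using w by (simp add: wr_carrier)
  have sv: "\<And>z. \<sigma> z \<in> carrier G" using w wr_val[OF is_group] by blast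
  have out: "\<And>z. z \<notin> Zk k \<Longrightarrow> \<sigma> z = \<one>" using w by (simp add: wr_carrier)
  have fs: "finite {z. \<sigma> z \<noteq> \<one>}" using w by (simp add: wr_carrier)
  define T where "T = (\<lambda>z. Mi (\<lambda>i. z i - x0 i))"
  define s where "s = (\<lambda>z. C (\<sigma> z))"
  have s_cl: "\<And>z. s z \<in> carrier G" using sv by (simp add: s_def)
  define \<tau> where "\<tau> = (\<lambda>z. if z \<in> Zk k then inv (Pf G A s T n z) else \<one>)"
  have T_Z: "\<And>z. z \<in> Zk k \<Longrightarrow> T z \<in> Zk k" using x0 by (simp add: T_def Mi_Z Zk_diff)
  have Tj_Z: "\<And>z j. z \<in> Zk k \<Longrightarrow> (T ^^ j) z \<in> Zk k"
  proof -
    fix z j assume "z \<in> Zk k" thus "(T ^^ j) z \<in> Zk k" by (induction j) (auto simp: T_Z)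
  qed
  have T_inj: "inj_on T (Zk k)"
  proof (rule inj_onI)
    fix a b assume a: "a \<in> Zk k" and b: "b \<in> Zk k" and e: "T a = T b"
    have "M (T a) = M (T b)" using e by simp
    hence "(\<lambda>i. a i - x0 i) = (\<lambda>i. b i - x0 i)" using a b x0 by (simp add: T_def MMi Zk_diff)
    thus "a = b" by (auto simp: fun_eq_iff)
  qed
  have Tj_inj: "\<And>j. inj_on (T ^^ j) (Zk k)"
  proof -
    fix j show "inj_on (T ^^ j) (Zk k)"
    proof (induction j)
      case 0 thus ?case by simp
    next
      case (Suc j)
      have "inj_on (T \<circ> (T ^^ j)) (Zk k)"
        by (rule comp_inj_on[OF Suc]) (rule inj_on_subset[OF T_inj], use Tj_Z in auto)
      thus ?case by (simp add: o_def)
    qed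
  qed
  have supp: "{z. \<tau> z \<noteq> \<one>} \<subseteq> (\<Union>j\<in>{..<n}. (T ^^ j) -` {z. \<sigma> z \<noteq> \<one>} \<inter> Zk k)"
  proof
    fix z assume "z \<in> {z. \<tau> z \<noteq> \<one>}"
    hence z: "z \<in> Zk k" and P: "Pf G A s T n z \<noteq> \<one>" by (auto simp: \<tau>_def split: if_splits)
    obtain j where j: "j < n" and sj: "s ((T ^^ j) z) \<noteq> \<one>" using Pf_one[of n s T z] P by blast
    have "\<sigma> ((T ^^ j) z) \<noteq> \<one>" using sj by (auto simp: s_def)
    thus "z \<in> (\<Union>j\<in>{..<n}. (T ^^ j) -` {z. \<sigma> z \<noteq> \<one>} \<inter> Zk k)" using j z by auto
  qed
  have "finite (\<Union>j\<in>{..<n}. (T ^^ j) -` {z. \<sigma> z \<noteq> \<one>} \<inter> Zk k)"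
    by (rule finite_UN_I) (simp, rule finite_vimage_IntI[OF fs Tj_inj])
  hence tfin: "finite {z. \<tau> z \<noteq> \<one>}" using supp finite_subset by blast
  have g: "(\<tau>, \<lambda>i. 0) \<in> carrier W"
    using tfin s_cl by (auto simp: wr_carrier \<tau>_def)
  have tv: "\<And>z. \<tau> z \<in> carrier G" using s_cl by (simp add: \<tau>_def)
  have prod: "(\<tau>, \<lambda>i. 0) \<otimes>\<^bsub>W\<^esub> (\<sigma>, x0) \<otimes>\<^bsub>W\<^esub> phi (inv\<^bsub>W\<^esub> (\<tau>, \<lambda>i. 0))
      = (\<lambda>z. \<tau> z \<otimes> \<sigma> z \<otimes> (if (\<lambda>i. z i - x0 i) \<in> Zk k then A (inv (\<tau> (Mi (\<lambda>i. z i - x0 i)))) else \<one>), x0)"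
    using g by (simp add: invW2 wr_mult phi_def M_zero)
  have e: "(\<lambda>z. \<tau> z \<otimes> \<sigma> z \<otimes> (if (\<lambda>i. z i - x0 i) \<in> Zk k then A (inv (\<tau> (Mi (\<lambda>i. z i - x0 i)))) else \<one>))
      = (\<lambda>z. \<one>)"
  proof
    fix z
    show "\<tau> z \<otimes> \<sigma> z \<otimes> (if (\<lambda>i. z i - x0 i) \<in> Zk k then A (inv (\<tau> (Mi (\<lambda>i. z i - x0 i)))) else \<one>) = \<one>"
    proof (cases "z \<in> Zk k")
      case False
      hence "(\<lambda>i. z i - x0 i) \<notin> Zk k" using x0 Zk_diff_iff by blast
      thus ?thesis using False out by (simp add: \<tau>_def)
    next
      case True
      have zx: "(\<lambda>i. z i - x0 i) \<in> Zk k" using True x0 by auto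
      have TZ: "T z \<in> Zk k" using T_Z[OF True] .
      define a where "a = Pf G A s T n z"
      define b where "b = s z"
      define c where "c = (A ^^ n) (s z)"
      define e where "e = A (Pf G A s T n (T z))"
      have abce: "a \<in> carrier G" "b \<in> carrier G" "c \<in> carrier G" "e \<in> carrier G"
        using s_cl by (simp_all add: a_def b_def c_def e_def)
      have "b \<otimes> e = Pf G A s T (Suc n) z" by (simp add: b_def e_def)
      also have "\<dots> = a \<otimes> (A ^^ n) (s ((T ^^ n) z))" unfolding a_def by (rule Pf_Suc'[OF s_cl])
      also have "(T ^^ n) z = z" unfolding T_def by (rule T_per[OF x0 True])
      finally have be: "b \<otimes> e = a \<otimes> c" by (simp add: c_def)
      have sig: "\<sigma> z = b \<otimes> inv c" using D_C[OF sv[of z]] by (simp add: D_def b_def c_def s_def)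
      have "\<tau> z \<otimes> \<sigma> z \<otimes> A (inv (\<tau> (T z))) = inv a \<otimes> (b \<otimes> inv c) \<otimes> e"
        using True TZ s_cl by (simp add: \<tau>_def a_def e_def sig)
      also have "\<dots> = \<one>" by (rule key_alg[OF abce be])
      finally show ?thesis using zx by (simp add: T_def)
    qed
  qed
  have res: "(\<tau>, \<lambda>i. 0) \<otimes>\<^bsub>W\<^esub> (\<sigma>, x0) \<otimes>\<^bsub>W\<^esub> phi (inv\<^bsub>W\<^esub> (\<tau>, \<lambda>i. 0)) = (\<lambda>z. \<one>, x0)"
    using prod e by simp
  have c2: "(\<lambda>z. \<one>, x0) \<in> carrier W" using x0 by (simp add: wr_carrier)
  show ?thesis using w g c2 res unfolding twisted_conj_def
    by (intro CollectI case_prodI conjI bexI[of _ "(\<tau>, \<lambda>i. 0)"]) auto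
qed

lemma R_finite: "reidemeister_number W phi < \<infinity>"
proof (rule finite_reidemeister[OF W_group phi_hom])
  show "finite ((\<lambda>x. (\<lambda>z. \<one>, x)) ` Xs)" using X_fin by simp
  fix w assume w: "w \<in> carrier W"
  obtain \<sigma> x where wx: "w = (\<sigma>, x)" by force
  have x: "x \<in> Zk k" using w wx by (simp add: wr_carrier)
  obtain y where y: "y \<in> Zk k" and yX: "(\<lambda>i. x i + y i - M y i) \<in> Xs" using X_cov[OF x] by blast
  have r1: "(w, (\<lambda>z. \<sigma> (\<lambda>i. z i - y i), \<lambda>i. x i + y i - M y i)) \<in> twisted_conj W phi"
    using step1[OF _ y] w wx by simp
  hence "(\<lambda>z. \<sigma> (\<lambda>i. z i - y i), \<lambda>i. x i + y i - M y i) \<in> carrier W"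
    by (simp add: twisted_conj_def)
  hence r2: "((\<lambda>z. \<sigma> (\<lambda>i. z i - y i), \<lambda>i. x i + y i - M y i), (\<lambda>z. \<one>, \<lambda>i. x i + y i - M y i)) \<in> twisted_conj W phi"
    by (rule step2)
  have "(w, (\<lambda>z. \<one>, \<lambda>i. x i + y i - M y i)) \<in> twisted_conj W phi"
    using twisted_equiv[OF W_group phi_hom] r1 r2 by (meson equivE transD)
  thus "\<exists>s\<in>(\<lambda>x. (\<lambda>z. \<one>, x)) ` Xs. (w, s) \<in> twisted_conj W phi" using yX by blast
qed

theorem core_result: "\<exists>\<phi>. \<phi> \<in> iso W W \<and> reidemeister_number W \<phi> < \<infinity>"
  using phi_iso R_finite by blast

end

definition Xs :: "nat \<Rightarrow> (nat \<Rightarrow> int) set" where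
  "Xs k = {f. \<forall>i. (i \<in> {..<k} \<longrightarrow> f i \<in> {0..4}) \<and> (i \<notin> {..<k} \<longrightarrow> f i = 0)}"

lemma Xs_fin: "finite (Xs k)"
  unfolding Xs_def by (rule finite_set_of_finite_funs) simp_all
lemma Xs_sub: "Xs k \<subseteq> Zk k"
proof
  fix f assume "f \<in> Xs k"
  hence "\<forall>i. i \<notin> {..<k} \<longrightarrow> f i = 0" unfolding Xs_def by blast
  thus "f \<in> Zk k" unfolding Zk_def by simp
qed

definition M4 :: "nat \<Rightarrow> (nat \<Rightarrow> int) \<Rightarrow> (nat \<Rightarrow> int)" where
  "M4 k x i = (if i < k then (if i mod 4 = 0 then - x (i+3) else if i mod 4 = 1 then x (i-1) - x (i+2)
     else if i mod 4 = 2 then x (i-1) - x (i+1) else x (i-1) - x i) else 0)"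
definition Mi4 :: "nat \<Rightarrow> (nat \<Rightarrow> int) \<Rightarrow> (nat \<Rightarrow> int)" where
  "Mi4 k y i = (if i < k then (if i mod 4 = 0 then y (i+1) - y i else if i mod 4 = 1 then y (i+1) - y (i-1)
     else if i mod 4 = 2 then y (i+1) - y (i-2) else - y (i-3)) else 0)"

definition blk4 :: "(nat \<Rightarrow> int) \<Rightarrow> nat \<Rightarrow> int \<times> int \<times> int \<times> int" where
  "blk4 x q = (x (4*q), x (4*q+1), x (4*q+2), x (4*q+3))"

fun m4 :: "int \<times> int \<times> int \<times> int \<Rightarrow> int \<times> int \<times> int \<times> int" where
  "m4 (a, b, c, d) = (-d, a - d, b - d, c - d)"
fun mi4 :: "int \<times> int \<times> int \<times> int \<Rightarrow> int \<times> int \<times> int \<times> int" where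
  "mi4 (a, b, c, d) = (b - a, c - a, d - a, -a)"
fun tsub4 :: "int \<times> int \<times> int \<times> int \<Rightarrow> int \<times> int \<times> int \<times> int \<Rightarrow> int \<times> int \<times> int \<times> int" where
  "tsub4 (a, b, c, d) (a', b', c', d') = (a - a', b - b', c - c', d - d')"

lemma mod4_lemmas: "Suc (4*q) mod 4 = Suc 0" "Suc (Suc (4*q)) mod 4 = (2::nat)" "Suc (Suc (Suc (4*q))) mod 4 = (3::nat)" "(4*q) mod 4 = (0::nat)"
   "4*q + 3 = Suc (Suc (Suc (4*q)))"
  by presburger+

lemma blk_M4: "4*q + 3 < k \<Longrightarrow> blk4 (M4 k x) q = m4 (blk4 x q)"
  by (simp add: blk4_def M4_def mod4_lemmas)
lemma blk_Mi4: "4*q + 3 < k \<Longrightarrow> blk4 (Mi4 k x) q = mi4 (blk4 x q)"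
  by (simp add: blk4_def Mi4_def mod4_lemmas)
lemma blk_diff4: "blk4 (\<lambda>i. z i - x i) q = tsub4 (blk4 z q) (blk4 x q)"
  by (simp add: blk4_def)

lemma blk_ext4:
  assumes k: "k = 4 * s" and x: "x \<in> Zk k" and y: "y \<in> Zk k"
    and b: "\<And>q. q < s \<Longrightarrow> blk4 x q = blk4 y q"
  shows "x = y"
proof
  fix i
  show "x i = y i"
  proof (cases "i < k")
    case False thus ?thesis using x y by (simp add: Zk_def)
  next
    case True
    define q where "q = i div 4"
    have q: "q < s" using True k by (simp add: q_def)
    have e: "x (4*q) = y (4*q)" "x (4*q+1) = y (4*q+1)" "x (4*q+2) = y (4*q+2)" "x (4*q+3) = y (4*q+3)"
      using b[OF q] by (simp_all add: blk4_def)
    have "i = 4*q \<or> i = 4*q+1 \<or> i = 4*q+2 \<or> i = 4*q+3" unfolding q_def by presburger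
    thus ?thesis using e by (elim disjE) simp_all
  qed
qed

lemma M4_Z: "M4 k x \<in> Zk k" by (simp add: Zk_def M4_def)
lemma Mi4_Z: "Mi4 k x \<in> Zk k" by (simp add: Zk_def Mi4_def)
lemma M4_add: "M4 k (\<lambda>i. x i + y i) = (\<lambda>i. M4 k x i + M4 k y i)"
  by (auto simp: M4_def fun_eq_iff)

lemma q_bound: "k = 4 * s \<Longrightarrow> q < s \<Longrightarrow> 4 * q + 3 < (k::nat)" by simp

lemma mi4_m4[simp]: "mi4 (m4 v) = v" by (cases v) simp
lemma m4_mi4[simp]: "m4 (mi4 v) = v" by (cases v) simp

lemma MiM4: "k = 4 * s \<Longrightarrow> x \<in> Zk k \<Longrightarrow> Mi4 k (M4 k x) = x"
  by (rule blk_ext4[OF _ Mi4_Z], assumption+) (simp add: blk_Mi4 blk_M4 q_bound)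
lemma MMi4: "k = 4 * s \<Longrightarrow> x \<in> Zk k \<Longrightarrow> M4 k (Mi4 k x) = x"
  by (rule blk_ext4[OF _ M4_Z], assumption+) (simp add: blk_Mi4 blk_M4 q_bound)

lemma Tblk4:
  assumes k: "k = 4 * s" and q: "q < s"
  shows "blk4 (((\<lambda>z. Mi4 k (\<lambda>i. z i - x0 i)) ^^ m) z) q
       = ((\<lambda>v. mi4 (tsub4 v (blk4 x0 q))) ^^ m) (blk4 z q)"
proof (induction m)
  case 0 thus ?case by simp
next
  case (Suc m)
  show ?case using q_bound[OF k q] Suc by (simp add: blk_Mi4 blk_diff4)
qed

lemma T5_tuple: "((\<lambda>v. mi4 (tsub4 v u)) ^^ 5) v = v"
  by (cases u, cases v) (simp add: numeral_eq_Suc)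

lemma T_per4:
  assumes k: "k = 4 * s" and x0: "x0 \<in> Zk k" and z: "z \<in> Zk k"
  shows "((\<lambda>z. Mi4 k (\<lambda>i. z i - x0 i)) ^^ 5) z = z"
proof (rule blk_ext4[OF k _ z])
  show "((\<lambda>z. Mi4 k (\<lambda>i. z i - x0 i)) ^^ 5) z \<in> Zk k"
    by (simp add: numeral_eq_Suc Mi4_Z)
  fix q assume q: "q < s"
  show "blk4 (((\<lambda>z. Mi4 k (\<lambda>i. z i - x0 i)) ^^ 5) z) q = blk4 z q"
    by (simp only: Tblk4[OF k q] T5_tuple)
qed

lemma blk_get4: "x i = (case blk4 x (i div 4) of (a, b, c, d) \<Rightarrow>
   if i mod 4 = 0 then a else if i mod 4 = 1 then b else if i mod 4 = 2 then c else d)"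
proof -
  define q where "q = i div 4"
  have "i = 4*q \<and> i mod 4 = 0 \<or> i = 4*q+1 \<and> i mod 4 = 1 \<or> i = 4*q+2 \<and> i mod 4 = 2 \<or> i = 4*q+3 \<and> i mod 4 = 3"
    unfolding q_def by presburger
  thus ?thesis unfolding q_def[symmetric] blk4_def by (elim disjE) (simp_all add: mod4_lemmas)
qed

fun tlin4 :: "int \<times> int \<times> int \<times> int \<Rightarrow> int \<times> int \<times> int \<times> int \<Rightarrow> int \<times> int \<times> int \<times> int \<Rightarrow> int \<times> int \<times> int \<times> int" where
  "tlin4 (a, b, c, d) (a', b', c', d') (a'', b'', c'', d'') = (a + a' - a'', b + b' - b'', c + c' - c'', d + d' - d'')"

lemma blk_lin4: "blk4 (\<lambda>i. x i + y i - w i) q = tlin4 (blk4 x q) (blk4 y q) (blk4 w q)"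
  by (simp add: blk4_def)

definition Y4 :: "nat \<Rightarrow> (nat \<Rightarrow> int) \<Rightarrow> (nat \<Rightarrow> int)" where
  "Y4 k x i = (if i < k then (let q = i div 4; a = x (4*q); b = x (4*q+1); c = x (4*q+2); d = x (4*q+3);
      t = - ((a + b + c + d) div 5) in
      if i mod 4 = 0 then b + c + d + 4*t else if i mod 4 = 1 then c + d + 3*t else if i mod 4 = 2 then d + 2*t else t)
     else 0)"

lemma div4_lemmas: "Suc (4*q) div 4 = q" "Suc (Suc (4*q)) div 4 = q" "Suc (Suc (Suc (4*q))) div 4 = q" "(4*q) div 4 = q"
  by presburger+

lemma blk_Y4: "4*q + 3 < k \<Longrightarrow> blk4 (Y4 k x) q =
   (let a = x (4*q); b = x (4*q+1); c = x (4*q+2); d = x (4*q+3); t = - ((a + b + c + d) div 5) in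
    (b + c + d + 4*t, c + d + 3*t, d + 2*t, t))"
  by (simp add: blk4_def Y4_def mod4_lemmas div4_lemmas Let_def)

lemma X_cov4:
  assumes k: "k = 4 * s" and x: "x \<in> Zk k"
  shows "\<exists>y\<in>Zk k. (\<lambda>i. x i + y i - M4 k y i) \<in> Xs k"
proof (intro bexI)
  show "Y4 k x \<in> Zk k" by (simp add: Zk_def Y4_def)
  define r where "r = (\<lambda>i. x i + Y4 k x i - M4 k (Y4 k x) i)"
  have br: "blk4 r q = ((x (4*q) + x (4*q+1) + x (4*q+2) + x (4*q+3)) mod 5, 0, 0, 0)" if q: "q < s" for q
  proof -
    have "blk4 r q = tlin4 (blk4 x q) (blk4 (Y4 k x) q) (m4 (blk4 (Y4 k x) q))"
      unfolding r_def blk_lin4 using blk_M4[OF q_bound[OF k q]] by simp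
    also have "\<dots> = ((x (4*q) + x (4*q+1) + x (4*q+2) + x (4*q+3)) mod 5, 0, 0, 0)"
    proof -
      define S where "S = x (4*q) + x (4*q+1) + x (4*q+2) + x (4*q+3)"
      have hS: "S mod 5 = S - 5 * (S div 5)" by (simp add: minus_div_mult_eq_mod[symmetric])
      show ?thesis unfolding blk_Y4[OF q_bound[OF k q]] S_def[symmetric] hS
        by (simp add: Let_def S_def blk4_def algebra_simps)
    qed
    finally show ?thesis .
  qed
  have "\<forall>i. (i \<in> {..<k} \<longrightarrow> r i \<in> {0..4}) \<and> (i \<notin> {..<k} \<longrightarrow> r i = 0)"
  proof (intro allI conjI impI)
    fix i assume "i \<in> {..<k}"
    hence q: "i div 4 < s" using k by auto
    have "r i = (if i mod 4 = 0 then (x (4*(i div 4)) + x (4*(i div 4)+1) + x (4*(i div 4)+2) + x (4*(i div 4)+3)) mod 5 else 0)"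
      by (subst blk_get4) (simp add: br[OF q])
    thus "r i \<in> {0..4}" by auto
  next
    fix i assume "i \<notin> {..<k}"
    thus "r i = 0" using x by (simp add: r_def Zk_def Y4_def M4_def)
  qed
  thus "r \<in> Xs k" unfolding Xs_def by blast
qed


definition M2 :: "nat \<Rightarrow> (nat \<Rightarrow> int) \<Rightarrow> (nat \<Rightarrow> int)" where
  "M2 k x i = (if i < k then (if i mod 2 = 0 then - x (i+1) else x (i-1) - x i) else 0)"
definition Mi2 :: "nat \<Rightarrow> (nat \<Rightarrow> int) \<Rightarrow> (nat \<Rightarrow> int)" where
  "Mi2 k y i = (if i < k then (if i mod 2 = 0 then y (i+1) - y i else - y (i-1)) else 0)"
definition blk2 :: "(nat \<Rightarrow> int) \<Rightarrow> nat \<Rightarrow> int \<times> int" where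
  "blk2 x q = (x (2*q), x (2*q+1))"
fun m2 :: "int \<times> int \<Rightarrow> int \<times> int" where "m2 (a, b) = (-b, a - b)"
fun mi2 :: "int \<times> int \<Rightarrow> int \<times> int" where "mi2 (a, b) = (b - a, -a)"
fun tsub2 :: "int \<times> int \<Rightarrow> int \<times> int \<Rightarrow> int \<times> int" where "tsub2 (a, b) (a', b') = (a - a', b - b')"

lemma mod2_lemmas: "Suc (2*q) mod 2 = Suc 0" "(2*q) mod 2 = (0::nat)" "Suc (2*q) div 2 = q" "(2*q) div 2 = q"
  "2*q + 1 = Suc (2*q)"
  by presburger+

lemma blk_M2: "2*q + 1 < k \<Longrightarrow> blk2 (M2 k x) q = m2 (blk2 x q)"
  by (simp add: blk2_def M2_def mod2_lemmas)
lemma blk_Mi2: "2*q + 1 < k \<Longrightarrow> blk2 (Mi2 k x) q = mi2 (blk2 x q)"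
  by (simp add: blk2_def Mi2_def mod2_lemmas)
lemma blk_diff2: "blk2 (\<lambda>i. z i - x i) q = tsub2 (blk2 z q) (blk2 x q)"
  by (simp add: blk2_def)

lemma blk_ext2:
  assumes k: "k = 2 * s" and x: "x \<in> Zk k" and y: "y \<in> Zk k"
    and b: "\<And>q. q < s \<Longrightarrow> blk2 x q = blk2 y q"
  shows "x = y"
proof
  fix i
  show "x i = y i"
  proof (cases "i < k")
    case False thus ?thesis using x y by (simp add: Zk_def)
  next
    case True
    define q where "q = i div 2"
    have q: "q < s" using True k by (simp add: q_def)
    have e: "x (2*q) = y (2*q)" "x (2*q+1) = y (2*q+1)"
      using b[OF q] by (simp_all add: blk2_def)
    have "i = 2*q \<or> i = 2*q+1" unfolding q_def by presburger
    thus ?thesis using e by (elim disjE) simp_all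
  qed
qed

lemma M2_Z: "M2 k x \<in> Zk k" by (simp add: Zk_def M2_def)
lemma Mi2_Z: "Mi2 k x \<in> Zk k" by (simp add: Zk_def Mi2_def)
lemma M2_add: "M2 k (\<lambda>i. x i + y i) = (\<lambda>i. M2 k x i + M2 k y i)"
  by (auto simp: M2_def fun_eq_iff)
lemma q_bound2: "k = 2 * s \<Longrightarrow> q < s \<Longrightarrow> 2 * q + 1 < (k::nat)" by simp
lemma mi2_m2[simp]: "mi2 (m2 v) = v" by (cases v) simp
lemma m2_mi2[simp]: "m2 (mi2 v) = v" by (cases v) simp

lemma MiM2: "k = 2 * s \<Longrightarrow> x \<in> Zk k \<Longrightarrow> Mi2 k (M2 k x) = x"
  by (rule blk_ext2[OF _ Mi2_Z], assumption+) (simp add: blk_Mi2 blk_M2 q_bound2)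
lemma MMi2: "k = 2 * s \<Longrightarrow> x \<in> Zk k \<Longrightarrow> M2 k (Mi2 k x) = x"
  by (rule blk_ext2[OF _ M2_Z], assumption+) (simp add: blk_Mi2 blk_M2 q_bound2)

lemma Tblk2:
  assumes k: "k = 2 * s" and q: "q < s"
  shows "blk2 (((\<lambda>z. Mi2 k (\<lambda>i. z i - x0 i)) ^^ m) z) q
       = ((\<lambda>v. mi2 (tsub2 v (blk2 x0 q))) ^^ m) (blk2 z q)"
proof (induction m)
  case 0 thus ?case by simp
next
  case (Suc m)
  show ?case using q_bound2[OF k q] Suc by (simp add: blk_Mi2 blk_diff2)
qed

lemma T3_tuple: "((\<lambda>v. mi2 (tsub2 v u)) ^^ 3) v = v"
  by (cases u, cases v) (simp add: numeral_eq_Suc)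

lemma T_per2:
  assumes k: "k = 2 * s" and x0: "x0 \<in> Zk k" and z: "z \<in> Zk k"
  shows "((\<lambda>z. Mi2 k (\<lambda>i. z i - x0 i)) ^^ 3) z = z"
proof (rule blk_ext2[OF k _ z])
  show "((\<lambda>z. Mi2 k (\<lambda>i. z i - x0 i)) ^^ 3) z \<in> Zk k"
    by (simp add: numeral_eq_Suc Mi2_Z)
  fix q assume q: "q < s"
  show "blk2 (((\<lambda>z. Mi2 k (\<lambda>i. z i - x0 i)) ^^ 3) z) q = blk2 z q"
    by (simp only: Tblk2[OF k q] T3_tuple)
qed

lemma blk_get2: "x i = (case blk2 x (i div 2) of (a, b) \<Rightarrow> if i mod 2 = 0 then a else b)"
proof -
  define q where "q = i div 2"
  have "i = 2*q \<and> i mod 2 = 0 \<or> i = 2*q+1 \<and> i mod 2 = 1"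
    unfolding q_def by presburger
  thus ?thesis unfolding q_def[symmetric] blk2_def by (elim disjE) (simp_all add: mod2_lemmas)
qed

fun tlin2 :: "int \<times> int \<Rightarrow> int \<times> int \<Rightarrow> int \<times> int \<Rightarrow> int \<times> int" where
  "tlin2 (a, b) (a', b') (a'', b'') = (a + a' - a'', b + b' - b'')"

lemma blk_lin2: "blk2 (\<lambda>i. x i + y i - w i) q = tlin2 (blk2 x q) (blk2 y q) (blk2 w q)"
  by (simp add: blk2_def)

definition Y2 :: "nat \<Rightarrow> (nat \<Rightarrow> int) \<Rightarrow> (nat \<Rightarrow> int)" where
  "Y2 k x i = (if i < k then (let q = i div 2; a = x (2*q); b = x (2*q+1);
      t = - ((a + b) div 3) in if i mod 2 = 0 then b + 2*t else t) else 0)"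

lemma blk_Y2: "2*q + 1 < k \<Longrightarrow> blk2 (Y2 k x) q =
   (let a = x (2*q); b = x (2*q+1); t = - ((a + b) div 3) in (b + 2*t, t))"
  by (simp add: blk2_def Y2_def mod2_lemmas Let_def)

lemma X_cov2:
  assumes k: "k = 2 * s" and x: "x \<in> Zk k"
  shows "\<exists>y\<in>Zk k. (\<lambda>i. x i + y i - M2 k y i) \<in> Xs k"
proof (intro bexI)
  show "Y2 k x \<in> Zk k" by (simp add: Zk_def Y2_def)
  define r where "r = (\<lambda>i. x i + Y2 k x i - M2 k (Y2 k x) i)"
  have br: "blk2 r q = ((x (2*q) + x (2*q+1)) mod 3, 0)" if q: "q < s" for q
  proof -
    have "blk2 r q = tlin2 (blk2 x q) (blk2 (Y2 k x) q) (m2 (blk2 (Y2 k x) q))"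
      unfolding r_def blk_lin2 using blk_M2[OF q_bound2[OF k q]] by simp
    also have "\<dots> = ((x (2*q) + x (2*q+1)) mod 3, 0)"
    proof -
      define S where "S = x (2*q) + x (2*q+1)"
      have hS: "S mod 3 = S - 3 * (S div 3)" by (simp add: minus_div_mult_eq_mod[symmetric])
      show ?thesis unfolding blk_Y2[OF q_bound2[OF k q]] S_def[symmetric] hS
        by (simp add: Let_def S_def blk2_def algebra_simps)
    qed
    finally show ?thesis .
  qed
  have "\<forall>i. (i \<in> {..<k} \<longrightarrow> r i \<in> {0..4}) \<and> (i \<notin> {..<k} \<longrightarrow> r i = 0)"
  proof (intro allI conjI impI)
    fix i assume "i \<in> {..<k}"
    hence q: "i div 2 < s" using k by auto
    have "r i = (if i mod 2 = 0 then (x (2*(i div 2)) + x (2*(i div 2)+1)) mod 3 else 0)"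
      by (subst blk_get2) (simp add: br[OF q])
    thus "r i \<in> {0..4}" by auto
  next
    fix i assume "i \<notin> {..<k}"
    thus "r i = 0" using x by (simp add: r_def Zk_def Y2_def M2_def)
  qed
  thus "r \<in> Xs k" unfolding Xs_def by blast
qed

definition M1 :: "nat \<Rightarrow> (nat \<Rightarrow> int) \<Rightarrow> (nat \<Rightarrow> int)" where
  "M1 k x i = (if i < k then - x i else 0)"

lemma M1_Z: "M1 k x \<in> Zk k" by (simp add: Zk_def M1_def)
lemma M1_add: "M1 k (\<lambda>i. x i + y i) = (\<lambda>i. M1 k x i + M1 k y i)"
  by (auto simp: M1_def fun_eq_iff)
lemma M1M1: "x \<in> Zk k \<Longrightarrow> M1 k (M1 k x) = x"
  by (auto simp: M1_def Zk_def fun_eq_iff)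
lemma T_per1:
  assumes z: "z \<in> Zk k"
  shows "((\<lambda>z. M1 k (\<lambda>i. z i - x0 i)) ^^ 2) z = z"
  using z by (auto simp: M1_def Zk_def fun_eq_iff numeral_eq_Suc)

lemma X_cov1:
  assumes x: "x \<in> Zk k"
  shows "\<exists>y\<in>Zk k. (\<lambda>i. x i + y i - M1 k y i) \<in> Xs k"
proof (intro bexI)
  define y where "y = (\<lambda>i. if i < k then - (x i div 2) else 0)"
  show "y \<in> Zk k" by (simp add: Zk_def y_def)
  have "\<And>i. i < k \<Longrightarrow> x i + y i - M1 k y i = x i mod 2"
    by (simp add: y_def M1_def minus_div_mult_eq_mod[symmetric])
  moreover have "\<And>i. \<not> i < k \<Longrightarrow> x i + y i - M1 k y i = 0"
    using x by (simp add: y_def M1_def Zk_def)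
  ultimately show "(\<lambda>i. x i + y i - M1 k y i) \<in> Xs k"
    unfolding Xs_def by auto
qed


definition mm :: "(nat \<times> nat \<times> nat) list \<Rightarrow> nat \<Rightarrow> int" where
  "mm ds i = int (fst (ds ! i) ^ fst (snd (ds ! i)))"
definition dd :: "(nat \<times> nat \<times> nat) list \<Rightarrow> nat \<Rightarrow> nat" where
  "dd ds i = snd (snd (ds ! i))"
definition Iset :: "(nat \<times> nat \<times> nat) list \<Rightarrow> (nat \<times> nat) set" where
  "Iset ds = {(i, j). i < length ds \<and> j < dd ds i}"

lemma PP_carrier:
  assumes pos: "\<And>i. i < length ds \<Longrightarrow> mm ds i \<ge> 1"
  shows "f \<in> carrier (prime_power_group ds) \<longleftrightarrow> f \<in> extensional (Iset ds) \<and>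
     (\<forall>i j. (i, j) \<in> Iset ds \<longrightarrow> 0 \<le> f (i, j) \<and> f (i, j) < mm ds i)"
proof -
  have "carrier ((\<lambda>(i, j). integer_mod_group (fst (ds ! i) ^ fst (snd (ds ! i)))) (i, j)) = {0..<mm ds i}"
    if ij: "(i, j) \<in> Iset ds" for i j
  proof -
    have "int (fst (ds ! i) ^ fst (snd (ds ! i))) \<ge> 1" using pos[of i] ij unfolding mm_def Iset_def by auto
    hence "fst (ds ! i) ^ fst (snd (ds ! i)) \<noteq> 0" by (intro notI) simp
    thus ?thesis by (simp add: carrier_integer_mod_group mm_def)
  qed
  hence h: "\<And>p. p \<in> Iset ds \<Longrightarrow> carrier ((\<lambda>(i, j). integer_mod_group (fst (ds ! i) ^ fst (snd (ds ! i)))) p) = {0..<mm ds (fst p)}"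
    by force
  have 1: "carrier (prime_power_group ds) = PiE (Iset ds) (\<lambda>p. carrier ((\<lambda>(i, j). integer_mod_group (fst (ds ! i) ^ fst (snd (ds ! i)))) p))"
    by (simp add: prime_power_group_def Iset_def dd_def)
  have 2: "\<dots> = PiE (Iset ds) (\<lambda>p. {0..<mm ds (fst p)})"
    by (rule PiE_cong) (rule h)
  show ?thesis unfolding 1 2 by (auto simp: PiE_iff)
qed

lemma PP_mult: "f \<otimes>\<^bsub>prime_power_group ds\<^esub> g = restrict (\<lambda>(i, j). (f (i, j) + g (i, j)) mod mm ds i) (Iset ds)"
  unfolding prime_power_group_def mult_product_group Iset_def[symmetric]
  by (auto simp: mm_def restrict_def fun_eq_iff Iset_def dd_def)

lemma PP_one: "\<one>\<^bsub>prime_power_group ds\<^esub> = restrict (\<lambda>p. 0) (Iset ds)"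
  unfolding prime_power_group_def one_product_group Iset_def[symmetric]
  by (auto simp: restrict_def fun_eq_iff Iset_def dd_def)

lemma PP_group: "group (prime_power_group ds)"
  unfolding prime_power_group_def by (rule product_group) auto

lemma PP_comm: "comm_group (prime_power_group ds)"
  by (rule group.group_comm_groupI[OF PP_group]) (simp add: PP_mult add.commute)

definition goodL :: "((nat \<Rightarrow> int) \<Rightarrow> (nat \<Rightarrow> int)) \<Rightarrow> int \<Rightarrow> nat \<Rightarrow> nat \<Rightarrow> bool" where
  "goodL L m d n \<longleftrightarrow> (\<forall>u v j. L (\<lambda>j. u j + v j) j = L u j + L v j)
     \<and> (\<forall>w. (\<forall>j<d. m dvd w j) \<longrightarrow> (\<forall>j<d. m dvd L w j))
     \<and> (\<forall>u. (\<forall>j<d. m dvd L u j) \<longrightarrow> (\<forall>j<d. m dvd u j))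
     \<and> (\<forall>u. (\<forall>j<d. m dvd ((L ^^ n) u j - u j)) \<longrightarrow> (\<forall>j<d. m dvd u j))"

lemma goodL_add: "goodL L m d n \<Longrightarrow> L (\<lambda>j. u j + v j) j = L u j + L v j"
  unfolding goodL_def by blast
lemma goodL_2: "goodL L m d n \<Longrightarrow> (\<And>j. j < d \<Longrightarrow> m dvd w j) \<Longrightarrow> j < d \<Longrightarrow> m dvd L w j"
  unfolding goodL_def by blast
lemma goodL_3: "goodL L m d n \<Longrightarrow> (\<And>j. j < d \<Longrightarrow> m dvd L u j) \<Longrightarrow> j < d \<Longrightarrow> m dvd u j"
  unfolding goodL_def by blast
lemma goodL_4: "goodL L m d n \<Longrightarrow> (\<And>j. j < d \<Longrightarrow> m dvd ((L ^^ n) u j - u j)) \<Longrightarrow> j < d \<Longrightarrow> m dvd u j"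
  unfolding goodL_def by blast

lemma goodL_cong:
  assumes g: "goodL L m d n" and uv: "\<And>j. j < d \<Longrightarrow> m dvd (u j - v j)" and j: "j < d"
  shows "m dvd (L u j - L v j)"
proof -
  have "L u j = L (\<lambda>j. v j + (u j - v j)) j" by simp
  also have "\<dots> = L v j + L (\<lambda>j. u j - v j) j" by (rule goodL_add[OF g])
  finally have e: "L u j - L v j = L (\<lambda>j. u j - v j) j" by simp
  have "m dvd L (\<lambda>j. u j - v j) j" by (rule goodL_2[OF g uv j])
  thus ?thesis using e by simp
qed

definition AP :: "(nat \<times> nat \<times> nat) list \<Rightarrow> (nat \<Rightarrow> (nat \<Rightarrow> int) \<Rightarrow> (nat \<Rightarrow> int)) \<Rightarrow> (nat \<times> nat \<Rightarrow> int) \<Rightarrow> (nat \<times> nat \<Rightarrow> int)" where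
  "AP ds L f = restrict (\<lambda>(i, j). L i (\<lambda>j'. f (i, j')) j mod mm ds i) (Iset ds)"

lemma mod_eq_from_dvd: "(m::int) dvd (a - b) \<Longrightarrow> a mod m = b mod m"
  by (simp add: mod_eq_dvd_iff)

lemma AP_iter:
  assumes good: "\<And>i. i < length ds \<Longrightarrow> goodL (L i) (mm ds i) (dd ds i) n"
    and ij: "(i, j) \<in> Iset ds" and t: "t > 0"
  shows "mm ds i dvd ((AP ds L ^^ t) f (i, j) - (L i ^^ t) (\<lambda>j'. f (i, j')) j)"
  using ij t
proof (induction t arbitrary: j)
  case 0 thus ?case by simp
next
  case (Suc t)
  have i: "i < length ds" and jd: "j < dd ds i" using Suc.prems by (auto simp: Iset_def)
  show ?case
  proof (cases "t = 0")
    case True thus ?thesis using Suc.prems by (simp add: AP_def mod_eq_dvd_iff[symmetric])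
  next
    case False
    have ih: "\<And>j'. j' < dd ds i \<Longrightarrow> mm ds i dvd ((AP ds L ^^ t) f (i, j') - (L i ^^ t) (\<lambda>j'. f (i, j')) j')"
      using Suc.IH False i by (auto simp: Iset_def)
    have c: "mm ds i dvd (L i (\<lambda>j'. (AP ds L ^^ t) f (i, j')) j - L i ((L i ^^ t) (\<lambda>j'. f (i, j'))) j)"
      by (rule goodL_cong[OF good[OF i] ih jd])
    have "(AP ds L ^^ Suc t) f (i, j) = L i (\<lambda>j'. (AP ds L ^^ t) f (i, j')) j mod mm ds i"
      using Suc.prems by (simp add: AP_def)
    thus ?thesis using c by (simp add: mod_eq_dvd_iff[symmetric] mod_diff_left_eq)
  qed
qed

lemma dvd_range_eq: "0 \<le> a \<Longrightarrow> a < m \<Longrightarrow> 0 \<le> b \<Longrightarrow> b < m \<Longrightarrow> (m::int) dvd (a - b) \<Longrightarrow> a = b"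
  by (metis mod_eq_dvd_iff mod_pos_pos_trivial)

lemma AP_result:
  assumes pos: "\<And>i. i < length ds \<Longrightarrow> mm ds i \<ge> 1"
    and good: "\<And>i. i < length ds \<Longrightarrow> goodL (L i) (mm ds i) (dd ds i) n"
    and n: "n > 0"
  shows "AP ds L \<in> iso (prime_power_group ds) (prime_power_group ds)
     \<and> (\<forall>g\<in>carrier (prime_power_group ds). (AP ds L ^^ n) g = g \<longrightarrow> g = \<one>\<^bsub>prime_power_group ds\<^esub>)"
proof -
  let ?P = "prime_power_group ds"
  note car = PP_carrier[OF pos]
  have cb: "0 \<le> f (i, j) \<and> f (i, j) < mm ds i" if "f \<in> carrier ?P" "(i, j) \<in> Iset ds" for f i j
    using that car by blast
  have mpos: "\<And>i j. (i, j) \<in> Iset ds \<Longrightarrow> mm ds i > 0" using pos by (force simp: Iset_def)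
  have closed: "AP ds L f \<in> carrier ?P" for f
    by (subst car) (auto simp: AP_def mpos)
  have hom: "AP ds L \<in> hom ?P ?P"
  proof (rule homI)
    fix f show "AP ds L f \<in> carrier ?P" by (rule closed)
  next
    fix f g assume f: "f \<in> carrier ?P" and g: "g \<in> carrier ?P"
    show "AP ds L (f \<otimes>\<^bsub>?P\<^esub> g) = AP ds L f \<otimes>\<^bsub>?P\<^esub> AP ds L g"
    proof (rule ext)
      fix p
      show "AP ds L (f \<otimes>\<^bsub>?P\<^esub> g) p = (AP ds L f \<otimes>\<^bsub>?P\<^esub> AP ds L g) p"
      proof (cases "p \<in> Iset ds")
        case False thus ?thesis by (simp add: AP_def PP_mult)
      next
        case True
        obtain i j where p: "p = (i, j)" by force
        have i: "i < length ds" and jd: "j < dd ds i" using True p by (auto simp: Iset_def)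
        note add = goodL_add[OF good[OF i]]
        have c: "mm ds i dvd (L i (\<lambda>j'. (f \<otimes>\<^bsub>?P\<^esub> g) (i, j')) j - L i (\<lambda>j'. f (i, j') + g (i, j')) j)"
        proof (rule goodL_cong[OF good[OF i] _ jd])
          fix j' assume "j' < dd ds i"
          hence "(i, j') \<in> Iset ds" using i by (simp add: Iset_def)
          thus "mm ds i dvd ((f \<otimes>\<^bsub>?P\<^esub> g) (i, j') - (f (i, j') + g (i, j')))"
            by (simp add: PP_mult mod_eq_dvd_iff[symmetric])
        qed
        have "AP ds L (f \<otimes>\<^bsub>?P\<^esub> g) p = L i (\<lambda>j'. (f \<otimes>\<^bsub>?P\<^esub> g) (i, j')) j mod mm ds i"
          using True p by (simp add: AP_def)
        also have "\<dots> = (L i (\<lambda>j'. f (i, j')) j + L i (\<lambda>j'. g (i, j')) j) mod mm ds i"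
          using c add[of "\<lambda>j'. f (i, j')" "\<lambda>j'. g (i, j')" j] by (simp add: mod_eq_dvd_iff)
        also have "\<dots> = (AP ds L f \<otimes>\<^bsub>?P\<^esub> AP ds L g) p"
          using True p by (simp add: AP_def PP_mult mod_add_eq)
        finally show ?thesis .
      qed
    qed
  qed
  have inj: "inj_on (AP ds L) (carrier ?P)"
  proof (rule inj_onI)
    fix f g assume f: "f \<in> carrier ?P" and g: "g \<in> carrier ?P" and e: "AP ds L f = AP ds L g"
    show "f = g"
    proof (rule extensionalityI[of _ "Iset ds"])
      show "f \<in> extensional (Iset ds)" "g \<in> extensional (Iset ds)" using f g car by blast+
      fix p assume p: "p \<in> Iset ds"
      obtain i j where pij: "p = (i, j)" by force
      have i: "i < length ds" and jd: "j < dd ds i" using p pij by (auto simp: Iset_def)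
      note add = goodL_add[OF good[OF i]]
      have H: "\<forall>j'<dd ds i. mm ds i dvd L i (\<lambda>j'. f (i, j') - g (i, j')) j'"
      proof (intro allI impI)
        fix j' assume j': "j' < dd ds i"
        hence ij': "(i, j') \<in> Iset ds" using i by (simp add: Iset_def)
        have "AP ds L f (i, j') = AP ds L g (i, j')" using e by simp
        hence "L i (\<lambda>j'. f (i, j')) j' mod mm ds i = L i (\<lambda>j'. g (i, j')) j' mod mm ds i"
          using ij' by (simp add: AP_def)
        moreover have "L i (\<lambda>j'. f (i, j')) j' = L i (\<lambda>j'. g (i, j')) j' + L i (\<lambda>j'. f (i, j') - g (i, j')) j'"
          using add[of "\<lambda>j'. g (i, j')" "\<lambda>j'. f (i, j') - g (i, j')" j'] by simp
        ultimately show "mm ds i dvd L i (\<lambda>j'. f (i, j') - g (i, j')) j'"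
          by (simp add: mod_eq_dvd_iff)
      qed
      have "mm ds i dvd (\<lambda>j'. f (i, j') - g (i, j')) j" by (rule goodL_3[OF good[OF i] _ jd]) (use H in auto)
      hence "mm ds i dvd (f (i, j) - g (i, j))" by simp
      moreover have "0 \<le> f (i, j)" "f (i, j) < mm ds i" "0 \<le> g (i, j)" "g (i, j) < mm ds i"
        using cb[OF f] cb[OF g] p pij by auto
      ultimately show "f p = g p" using pij dvd_range_eq[of "f (i, j)" "mm ds i" "g (i, j)"] by simp
    qed
  qed
  have fin: "finite (carrier ?P)"
  proof -
    have "carrier ?P \<subseteq> PiE (Iset ds) (\<lambda>p. {0..<mm ds (fst p)})"
    proof
      fix f assume f: "f \<in> carrier ?P"
      hence "f \<in> extensional (Iset ds)" using car by blast
      moreover have "\<forall>p\<in>Iset ds. f p \<in> {0..<mm ds (fst p)}" using cb[OF f] by force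
      ultimately show "f \<in> PiE (Iset ds) (\<lambda>p. {0..<mm ds (fst p)})" by (simp add: PiE_iff)
    qed
    moreover have "finite (PiE (Iset ds) (\<lambda>p. {0..<mm ds (fst p)}))"
    proof -
      have "Iset ds = (SIGMA i:{..<length ds}. {..<dd ds i})" by (auto simp: Iset_def)
      hence "finite (Iset ds)" by simp
      thus ?thesis by (intro finite_PiE) auto
    qed
    ultimately show ?thesis using finite_subset by blast
  qed
  have surj: "AP ds L ` carrier ?P = carrier ?P"
    by (rule endo_inj_surj[OF fin]) (use closed inj in auto)
  have iso: "AP ds L \<in> iso ?P ?P"
    using hom inj surj by (simp add: iso_def bij_betw_def)
  have fixfree: "g = \<one>\<^bsub>?P\<^esub>" if g: "g \<in> carrier ?P" and e: "(AP ds L ^^ n) g = g" for g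
  proof (rule extensionalityI[of _ "Iset ds"])
    show "g \<in> extensional (Iset ds)" using g car by blast
    show "\<one>\<^bsub>?P\<^esub> \<in> extensional (Iset ds)" by (simp add: PP_one)
    fix p assume p: "p \<in> Iset ds"
    obtain i j where pij: "p = (i, j)" by force
    have i: "i < length ds" and jd: "j < dd ds i" using p pij by (auto simp: Iset_def)
    have H: "\<forall>j'<dd ds i. mm ds i dvd ((L i ^^ n) (\<lambda>j'. g (i, j')) j' - g (i, j'))"
    proof (intro allI impI)
      fix j' assume "j' < dd ds i"
      hence "(i, j') \<in> Iset ds" using i by (simp add: Iset_def)
      from AP_iter[OF good this n, of g] e
      show "mm ds i dvd ((L i ^^ n) (\<lambda>j'. g (i, j')) j' - g (i, j'))"
        by (simp add: dvd_diff_commute)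
    qed
    have "mm ds i dvd (\<lambda>j'. g (i, j')) j" by (rule goodL_4[OF good[OF i] _ jd]) (use H in auto)
    hence "mm ds i dvd g (i, j)" by simp
    moreover have "0 \<le> g (i, j)" "g (i, j) < mm ds i" using cb[OF g] p pij by auto
    ultimately have "g (i, j) = 0" using dvd_range_eq[of "g (i,j)" "mm ds i" 0] mpos[OF p[unfolded pij]] by simp
    thus "g p = \<one>\<^bsub>?P\<^esub> p" using p pij by (simp add: PP_one)
  qed
  show ?thesis using iso fixfree by blast
qed


definition Lsc :: "int \<Rightarrow> (nat \<Rightarrow> int) \<Rightarrow> (nat \<Rightarrow> int)" where
  "Lsc c u j = c * u j"

lemma Lsc_pow: "(Lsc c ^^ t) u j = c ^ t * u j"
  by (induction t arbitrary: j) (simp_all add: Lsc_def)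

lemma goodL_Lsc:
  assumes c1: "coprime m c" and c2: "coprime m (c ^ n - 1)"
  shows "goodL (Lsc c) m d n"
  unfolding goodL_def
proof (intro conjI allI impI)
  fix u v j show "Lsc c (\<lambda>j. u j + v j) j = Lsc c u j + Lsc c v j" by (simp add: Lsc_def algebra_simps)
next
  fix w j assume "\<forall>j<d. m dvd w j" "j < d" thus "m dvd Lsc c w j" by (simp add: Lsc_def)
next
  fix u j assume "\<forall>j<d. m dvd Lsc c u j" "j < d"
  hence "m dvd u j * c" by (simp add: Lsc_def mult.commute)
  thus "m dvd u j" using c1 coprime_dvd_mult_left_iff by blast
next
  fix u j assume "\<forall>j<d. m dvd ((Lsc c ^^ n) u j - u j)" "j < d"
  hence "m dvd u j * (c ^ n - 1)" by (simp add: Lsc_pow algebra_simps)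
  thus "m dvd u j" using c2 coprime_dvd_mult_left_iff by blast
qed

definition off :: "nat \<Rightarrow> nat" where "off d = (if odd d then 3 else 0)"

definition Lb :: "nat \<Rightarrow> (nat \<Rightarrow> int) \<Rightarrow> (nat \<Rightarrow> int)" where
  "Lb d u j = (if j < off d then (if j = 0 then u 2 else if j = 1 then u 0 + u 2 else u 1)
     else if even (j - off d) then u (j + 1) else u (j - 1) + u j)"

fun c2 :: "int \<times> int \<Rightarrow> int \<times> int" where "c2 (x, y) = (y, x + y)"
fun s3 :: "int \<times> int \<times> int \<Rightarrow> int \<times> int \<times> int" where "s3 (x, y, z) = (z, x + z, y)"

lemma Lb_pair:
  assumes a: "off d \<le> a" "even (a - off d)"
  shows "((Lb d ^^ t) u a, (Lb d ^^ t) u (a + 1)) = (c2 ^^ t) (u a, u (a + 1))"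
proof (induction t)
  case 0 thus ?case by simp
next
  case (Suc t)
  have e1: "Lb d w a = w (a + 1)" for w using a by (simp add: Lb_def)
  have e2: "Lb d w (a + 1) = w a + w (a + 1)" for w
    using a by (simp add: Lb_def)
  have "(c2 ^^ Suc t) (u a, u (a + 1)) = c2 ((c2 ^^ t) (u a, u (a + 1)))" by simp
  also have "\<dots> = c2 ((Lb d ^^ t) u a, (Lb d ^^ t) u (a + 1))" by (simp only: Suc)
  also have "\<dots> = ((Lb d ^^ Suc t) u a, (Lb d ^^ Suc t) u (a + 1))"
    by (simp only: funpow.simps o_apply e1 e2 c2.simps)
  finally show ?case by simp
qed

lemma Lb_triple:
  assumes d: "odd d"
  shows "((Lb d ^^ t) u 0, (Lb d ^^ t) u 1, (Lb d ^^ t) u 2) = (s3 ^^ t) (u 0, u 1, u 2)"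
proof (induction t)
  case 0 thus ?case by simp
next
  case (Suc t)
  have e: "Lb d w 0 = w 2" "Lb d w 1 = w 0 + w 2" "Lb d w 2 = w 1" for w
    using d by (simp_all add: Lb_def off_def)
  have "(s3 ^^ Suc t) (u 0, u 1, u 2) = s3 ((s3 ^^ t) (u 0, u 1, u 2))" by simp
  also have "\<dots> = s3 ((Lb d ^^ t) u 0, (Lb d ^^ t) u 1, (Lb d ^^ t) u 2)" by (simp only: Suc)
  also have "\<dots> = ((Lb d ^^ Suc t) u 0, (Lb d ^^ Suc t) u 1, (Lb d ^^ Suc t) u 2)"
    by (simp only: funpow.simps o_apply e s3.simps)
  finally show ?case by simp
qed

lemma c2_2: "(c2 ^^ 2) (x, y) = (x + y, x + 2 * y)" by (simp add: numeral_eq_Suc)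
lemma c2_5: "(c2 ^^ 5) (x, y) = (3 * x + 5 * y, 5 * x + 8 * y)" by (simp add: numeral_eq_Suc)
lemma s3_2: "(s3 ^^ 2) (x, y, z) = (y, y + z, x + z)" by (simp add: numeral_eq_Suc)
lemma s3_5: "(s3 ^^ 5) (x, y, z) = (x + y + z, x + 2 * y + 2 * z, x + y + 2 * z)" by (simp add: numeral_eq_Suc)

lemma pos_cases:
  assumes "j < d" "2 \<le> d"
  obtains (tri) "odd d" "j < 3" "3 \<le> d"
    | (pair) a where "off d \<le> a" "even (a - off d)" "a + 1 < d" "j = a \<or> j = a + 1"
proof (cases "j < off d")
  case True
  hence "odd d" "j < 3" by (auto simp: off_def split: if_splits)
  moreover have "3 \<le> d" using \<open>odd d\<close> assms(2) by presburger
  ultimately show ?thesis by (rule tri)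
next
  case False
  define a where "a = off d + 2 * ((j - off d) div 2)"
  have "even (d - off d)" by (simp add: off_def)
  hence "off d \<le> a" "even (a - off d)" "a + 1 < d" "j = a \<or> j = a + 1"
    using False assms unfolding a_def by (auto simp: off_def) presburger+
  thus ?thesis by (rule pair)
qed

lemma lin2: "(m::int) dvd a \<Longrightarrow> m dvd b \<Longrightarrow> c = p * a + q * b \<Longrightarrow> m dvd c"
  by simp
lemma lin3: "(m::int) dvd a \<Longrightarrow> m dvd b \<Longrightarrow> m dvd e \<Longrightarrow> c = p * a + q * b + r * e \<Longrightarrow> m dvd c"
  by simp

lemma Lb_a: "off d \<le> a \<Longrightarrow> even (a - off d) \<Longrightarrow> Lb d w a = w (a + 1)"
  by (simp add: Lb_def)
lemma Lb_a1: "off d \<le> a \<Longrightarrow> even (a - off d) \<Longrightarrow> Lb d w (a + 1) = w a + w (a + 1)"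
  by (simp add: Lb_def)
lemma Lb_t: "odd d \<Longrightarrow> Lb d w 0 = w 2 \<and> Lb d w 1 = w 0 + w 2 \<and> Lb d w 2 = w 1"
  by (simp add: Lb_def off_def)

lemma goodL_Lb:
  assumes d: "2 \<le> d" and n: "n = 2 \<or> (n = 5 \<and> coprime m 11)"
  shows "goodL (Lb d) m d n"
  unfolding goodL_def
proof (intro conjI allI impI)
  fix u v j show "Lb d (\<lambda>j. u j + v j) j = Lb d u j + Lb d v j" by (simp add: Lb_def)
next
  fix w j assume H: "\<forall>j<d. m dvd w j" and j: "j < d"
  from j d show "m dvd Lb d w j"
  proof (cases rule: pos_cases)
    case tri
    have "j = 0 \<or> j = 1 \<or> j = 2" using tri by auto
    thus ?thesis using Lb_t[OF tri(1), of w] H tri by auto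
  next
    case (pair a)
    have lt: "a < d" "a + 1 < d" using pair(3) by auto
    thus ?thesis using Lb_a[OF pair(1,2), of w] Lb_a1[OF pair(1,2), of w] H[rule_format, OF lt(1)] H[rule_format, OF lt(2)] pair(4) by auto
  qed
next
  fix u j assume H: "\<forall>j<d. m dvd Lb d u j" and j: "j < d"
  from j d show "m dvd u j"
  proof (cases rule: pos_cases)
    case tri
    have lt: "0 < d" "1 < d" "2 < d" using tri(3) by auto
    have h: "m dvd u 2" "m dvd u 0 + u 2" "m dvd u 1"
      using Lb_t[OF tri(1), of u] H[rule_format, OF lt(1)] H[rule_format, OF lt(2)] H[rule_format, OF lt(3)] by auto
    have "m dvd u 0" using lin2[OF h(1) h(2), of "u 0" "-1" 1] by simp
    moreover have "j = 0 \<or> j = 1 \<or> j = 2" using tri by auto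
    ultimately show ?thesis using h by auto
  next
    case (pair a)
    have lt: "a < d" "a + 1 < d" using pair(3) by auto
    have h: "m dvd u (a + 1)" "m dvd u a + u (a + 1)"
      using Lb_a[OF pair(1,2), of u] Lb_a1[OF pair(1,2), of u] H[rule_format, OF lt(1)] H[rule_format, OF lt(2)] by auto
    have "m dvd u a" using lin2[OF h(1) h(2), of "u a" "-1" 1] by simp
    thus ?thesis using h pair(4) by auto
  qed
next
  fix u j assume H: "\<forall>j<d. m dvd ((Lb d ^^ n) u j - u j)" and j: "j < d"
  from j d show "m dvd u j"
  proof (cases rule: pos_cases)
    case tri
    have T: "((Lb d ^^ n) u 0, (Lb d ^^ n) u 1, (Lb d ^^ n) u 2) = (s3 ^^ n) (u 0, u 1, u 2)"
      by (rule Lb_triple[OF tri(1)])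
    have lt: "0 < d" "1 < d" "2 < d" using tri(3) by auto
    have h: "m dvd ((Lb d ^^ n) u 0 - u 0)" "m dvd ((Lb d ^^ n) u 1 - u 1)" "m dvd ((Lb d ^^ n) u 2 - u 2)"
      using H[rule_format, OF lt(1)] H[rule_format, OF lt(2)] H[rule_format, OF lt(3)] by auto
    have all: "m dvd u 0 \<and> m dvd u 1 \<and> m dvd u 2"
      using n
    proof
      assume n2: "n = 2"
      have h': "m dvd u 1 - u 0" "m dvd u 2" "m dvd u 0" using h T unfolding n2 s3_2 by auto
      have "m dvd u 1" using lin2[OF h'(1) h'(3), of "u 1" 1 1] by simp
      thus ?thesis using h' by auto
    next
      assume "n = 5 \<and> coprime m 11"
      hence n5: "n = 5" by simp
      have h': "m dvd u 1 + u 2" "m dvd u 0 + u 1 + 2 * u 2" "m dvd u 0 + u 1 + u 2"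
        using h T unfolding n5 s3_5 by (auto simp: algebra_simps)
      have z: "m dvd u 2" using lin2[OF h'(2) h'(3), of "u 2" 1 "-1"] by simp
      have y: "m dvd u 1" using lin2[OF h'(1) z, of "u 1" 1 "-1"] by simp
      have x: "m dvd u 0" using lin3[OF h'(3) y z, of "u 0" 1 "-1" "-1"] by simp
      show ?thesis using x y z by simp
    qed
    have "j = 0 \<or> j = 1 \<or> j = 2" using tri by auto
    thus ?thesis using all by auto
  next
    case (pair a)
    have P: "((Lb d ^^ n) u a, (Lb d ^^ n) u (a + 1)) = (c2 ^^ n) (u a, u (a + 1))"
      by (rule Lb_pair[OF pair(1,2)])
    have lt: "a < d" "a + 1 < d" using pair(3) by auto
    have h: "m dvd ((Lb d ^^ n) u a - u a)" "m dvd ((Lb d ^^ n) u (a + 1) - u (a + 1))"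
      using H[rule_format, OF lt(1)] H[rule_format, OF lt(2)] by auto
    have both: "m dvd u a \<and> m dvd u (a + 1)"
      using n
    proof
      assume n2: "n = 2"
      have h': "m dvd u (a + 1)" "m dvd u a + u (a + 1)" using h P unfolding n2 c2_2 by (auto simp: algebra_simps)
      have "m dvd u a" using lin2[OF h'(1) h'(2), of "u a" "-1" 1] by simp
      thus ?thesis using h' by auto
    next
      assume "n = 5 \<and> coprime m 11"
      hence n5: "n = 5" and cp: "coprime m 11" by simp_all
      have h': "m dvd 2 * u a + 5 * u (a + 1)" "m dvd 5 * u a + 7 * u (a + 1)"
        using h P unfolding n5 c2_5 by (auto simp: algebra_simps)
      have "m dvd u a * 11" using lin2[OF h'(1) h'(2), of "u a * 11" "-7" 5] by (simp add: algebra_simps)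
      hence x: "m dvd u a" using cp coprime_dvd_mult_left_iff by blast
      have "m dvd u (a + 1) * 11" using lin2[OF h'(1) h'(2), of "u (a + 1) * 11" 5 "-2"] by (simp add: algebra_simps)
      hence y: "m dvd u (a + 1)" using cp coprime_dvd_mult_left_iff by blast
      show ?thesis using x y by simp
    qed
    thus ?thesis using pair(4) by auto
  qed
qed


lemma transfer_aut:
  assumes G: "group G" and P: "group P" and h: "h \<in> iso G P"
    and A: "B \<in> iso P P" and fx: "\<forall>g\<in>carrier P. (B ^^ n) g = g \<longrightarrow> g = \<one>\<^bsub>P\<^esub>"
  shows "\<exists>A. A \<in> iso G G \<and> (\<forall>g\<in>carrier G. (A ^^ n) g = g \<longrightarrow> g = \<one>\<^bsub>G\<^esub>)"
proof -
  define hi where "hi = inv_into (carrier G) h"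
  have hi: "hi \<in> iso P G" unfolding hi_def by (rule group.iso_set_sym[OF G h])
  have iso: "hi \<circ> (B \<circ> h) \<in> iso G G"
    by (rule iso_set_trans[OF iso_set_trans[OF h A] hi])
  have hb: "bij_betw h (carrier G) (carrier P)" using h by (simp add: iso_def)
  have hh: "h (hi y) = y" if "y \<in> carrier P" for y
    unfolding hi_def using hb that by (meson bij_betw_inv_into_right)
  have hih: "hi (h g) = g" if "g \<in> carrier G" for g
    unfolding hi_def using hb that by (meson bij_betw_inv_into_left)
  have hc: "h g \<in> carrier P" if "g \<in> carrier G" for g using hb that by (meson bij_betwE)
  have Ac: "B y \<in> carrier P" if "y \<in> carrier P" for y
    using A that by (auto simp: iso_def hom_def)
  have Amc: "(B ^^ m) y \<in> carrier P" if "y \<in> carrier P" for y m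
    using that by (induction m) (auto simp: Ac)
  have it: "((hi \<circ> (B \<circ> h)) ^^ m) g = hi ((B ^^ m) (h g))" if g: "g \<in> carrier G" for g m
  proof (induction m)
    case 0 thus ?case using hih[OF g] by simp
  next
    case (Suc m)
    thus ?case using hh[OF Amc[OF hc[OF g]]] by simp
  qed
  have "\<forall>g\<in>carrier G. ((hi \<circ> (B \<circ> h)) ^^ n) g = g \<longrightarrow> g = \<one>\<^bsub>G\<^esub>"
  proof (intro ballI impI)
    fix g assume g: "g \<in> carrier G" and e: "((hi \<circ> (B \<circ> h)) ^^ n) g = g"
    have "hi ((B ^^ n) (h g)) = g" using e it[OF g] by simp
    hence "(B ^^ n) (h g) = h g" using hh[OF Amc[OF hc[OF g]]] by metis
    hence "h g = \<one>\<^bsub>P\<^esub>" using fx hc[OF g] by blast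
    moreover have "h \<one>\<^bsub>G\<^esub> = \<one>\<^bsub>P\<^esub>"
      using h G P by (simp add: iso_def group_hom.hom_one group_hom_def group_hom_axioms_def)
    ultimately have "h g = h \<one>\<^bsub>G\<^esub>" by simp
    thus "g = \<one>\<^bsub>G\<^esub>" using hb g group.is_monoid[OF G]
      by (metis bij_betw_def inj_onD monoid.one_closed)
  qed
  thus ?thesis using iso by blast
qed

lemma core_apply:
  assumes "comm_group G" "finite (carrier G)" "A \<in> iso G G"
    "\<And>g. g \<in> carrier G \<Longrightarrow> (A ^^ n) g = g \<Longrightarrow> g = \<one>\<^bsub>G\<^esub>"
    "\<And>x. x \<in> Zk k \<Longrightarrow> M x \<in> Zk k"
    "\<And>x. x \<in> Zk k \<Longrightarrow> Mi x \<in> Zk k"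
    "\<And>x. x \<in> Zk k \<Longrightarrow> Mi (M x) = x"
    "\<And>x. x \<in> Zk k \<Longrightarrow> M (Mi x) = x"
    "\<And>x y. x \<in> Zk k \<Longrightarrow> y \<in> Zk k \<Longrightarrow> M (\<lambda>i. x i + y i) = (\<lambda>i. M x i + M y i)"
    "finite XX" "XX \<subseteq> Zk k"
    "\<And>x. x \<in> Zk k \<Longrightarrow> \<exists>y\<in>Zk k. (\<lambda>i. x i + y i - M y i) \<in> XX"
    "\<And>x0 z. x0 \<in> Zk k \<Longrightarrow> z \<in> Zk k \<Longrightarrow> ((\<lambda>z. Mi (\<lambda>i. z i - x0 i)) ^^ n) z = z"
  shows "\<exists>\<phi>. \<phi> \<in> iso (wreath_Zk G k) (wreath_Zk G k) \<and> reidemeister_number (wreath_Zk G k) \<phi> < \<infinity>"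
  by (rule wcore.core_result[OF wcore.intro[OF assms(1) wcore_axioms.intro[OF assms(2-13)]]])

lemma entry:
  assumes "i < length ds" "\<forall>(p, r, d) \<in> set ds. Q p r d"
  shows "Q (fst (ds ! i)) (fst (snd (ds ! i))) (snd (snd (ds ! i)))"
proof -
  have "ds ! i \<in> set ds" using assms(1) by simp
  moreover obtain p r d where e: "ds ! i = (p, r, d)" by (metis prod_cases3)
  ultimately have "Q p r d" using assms(2) by fastforce
  thus ?thesis using e by simp
qed

lemma cop:
  assumes p: "Factorial_Ring.prime (p::nat)" and nd: "\<not> int p dvd c"
  shows "coprime (int (p ^ r)) c"
proof -
  have "Factorial_Ring.prime (int p)" using p by simp
  hence "coprime (int p) c" using nd by (rule prime_imp_coprime)
  thus ?thesis by simp
qed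

lemma not_dvd2: "Factorial_Ring.prime (p::nat) \<Longrightarrow> p \<noteq> 2 \<Longrightarrow> \<not> int p dvd 2"
proof
  assume p: "Factorial_Ring.prime p" "p \<noteq> 2" and d: "int p dvd 2"
  have "p dvd 2" using d by (metis of_nat_dvd_iff of_nat_numeral)
  hence "p \<le> 2" by (simp add: dvd_imp_le)
  moreover have "p \<ge> 2" using p(1) by (simp add: prime_ge_2_nat)
  ultimately show False using p(2) by simp
qed

lemma not_dvd_m2: "Factorial_Ring.prime (p::nat) \<Longrightarrow> p \<noteq> 2 \<Longrightarrow> \<not> int p dvd (-2)"
  using not_dvd2 by simp

lemma not_dvd3: "Factorial_Ring.prime (p::nat) \<Longrightarrow> p \<noteq> 3 \<Longrightarrow> \<not> int p dvd 3"
proof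
  assume p: "Factorial_Ring.prime p" "p \<noteq> 3" and d: "int p dvd 3"
  have pd: "p dvd 3" using d by (metis of_nat_dvd_iff of_nat_numeral)
  hence "p \<le> 3" by (simp add: dvd_imp_le)
  moreover have "p \<ge> 2" using p(1) by (simp add: prime_ge_2_nat)
  ultimately have "p = 2" using p(2) by simp
  thus False using pd by simp
qed


lemma cop_m1: "coprime (m::int) (-1)" by simp

lemma aut_from_L:
  assumes G: "comm_group G" and h: "G \<cong> prime_power_group ds"
    and pos: "\<And>i. i < length ds \<Longrightarrow> mm ds i \<ge> 1"
    and good: "\<And>i. i < length ds \<Longrightarrow> goodL (L i) (mm ds i) (dd ds i) n" and n: "n > 0"
  shows "\<exists>A. A \<in> iso G G \<and> (\<forall>g\<in>carrier G. (A ^^ n) g = g \<longrightarrow> g = \<one>\<^bsub>G\<^esub>)"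
proof -
  obtain hh where hh: "hh \<in> iso G (prime_power_group ds)" using h unfolding is_iso_def by blast
  have R: "AP ds L \<in> iso (prime_power_group ds) (prime_power_group ds)
     \<and> (\<forall>g\<in>carrier (prime_power_group ds). (AP ds L ^^ n) g = g \<longrightarrow> g = \<one>\<^bsub>prime_power_group ds\<^esub>)"
    by (rule AP_result[OF pos good n])
  show ?thesis
    by (rule transfer_aut[OF comm_group.axioms(2)[OF G] PP_group hh conjunct1[OF R] conjunct2[OF R]])
qed

theorem mainTheorem1:
  fixes G :: "('a, 'b) monoid_scheme" and k :: nat and ds :: "(nat \<times> nat \<times> nat) list"
  assumes "k \<ge> 1"
    and "comm_group G" and "finite (carrier G)"
    and "G \<cong> prime_power_group ds"
    and "distinct (map (\<lambda>(p, r, d). (p, r)) ds)"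
    and "\<forall>(p, r, d) \<in> set ds. Factorial_Ring.prime p \<and> r \<ge> 1 \<and> d \<ge> 1"
    and "(\<forall>(p, r, d) \<in> set ds. (p = 2 \<or> p = 3) \<longrightarrow> d \<ge> 2)
         \<or> ((\<forall>(p, r, d) \<in> set ds. p \<noteq> 2) \<and> even k)
         \<or> ((\<forall>(p, r, d) \<in> set ds. p = 2 \<longrightarrow> d \<ge> 2) \<and> (\<exists>s::nat. s \<ge> 1 \<and> k = 4 * s))"
  shows "\<exists>\<phi>. \<phi> \<in> iso (wreath_Zk G k) (wreath_Zk G k)
              \<and> reidemeister_number (wreath_Zk G k) \<phi> < \<infinity>"
proof -
  note G = assms(2) and fin = assms(3) and iso = assms(4)
  have E: "Factorial_Ring.prime (fst (ds ! i)) \<and> fst (snd (ds ! i)) \<ge> 1 \<and> snd (snd (ds ! i)) \<ge> 1"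
    if "i < length ds" for i
    using entry[OF that assms(6)] by simp
  have pos: "mm ds i \<ge> 1" if i: "i < length ds" for i
  proof -
    have "fst (ds ! i) \<ge> 2" using E[OF i] prime_ge_2_nat by blast
    hence "fst (ds ! i) ^ fst (snd (ds ! i)) \<ge> 1" by simp
    hence "int (fst (ds ! i) ^ fst (snd (ds ! i))) \<ge> 1" by linarith
    thus ?thesis by (simp only: mm_def)
  qed
  have mmE: "mm ds i = int (fst (ds ! i) ^ fst (snd (ds ! i)))" for i by (simp add: mm_def)
  from assms(7) show ?thesis
  proof (elim disjE conjE exE)
    assume c1: "\<forall>(p, r, d) \<in> set ds. (p = 2 \<or> p = 3) \<longrightarrow> d \<ge> 2"
    define L where "L i = (if 2 \<le> dd ds i then Lb (dd ds i) else Lsc 2)" for i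
    have good: "goodL (L i) (mm ds i) (dd ds i) 2" if i: "i < length ds" for i
    proof (cases "2 \<le> dd ds i")
      case True thus ?thesis by (simp add: L_def goodL_Lb)
    next
      case False
      have c: "(fst (ds ! i) = 2 \<or> fst (ds ! i) = 3) \<longrightarrow> snd (snd (ds ! i)) \<ge> 2"
        using entry[OF i c1] by simp
      hence p2: "fst (ds ! i) \<noteq> 2" and p3: "fst (ds ! i) \<noteq> 3" using False by (auto simp: dd_def)
      have "coprime (mm ds i) 2" unfolding mmE by (rule cop[OF conjunct1[OF E[OF i]] not_dvd2[OF conjunct1[OF E[OF i]] p2]])
      moreover have "coprime (mm ds i) (2 ^ 2 - 1)" unfolding mmE
        using cop[OF conjunct1[OF E[OF i]] not_dvd3[OF conjunct1[OF E[OF i]] p3]] by simp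
      ultimately show ?thesis using False by (simp add: L_def goodL_Lsc)
    qed
    obtain A where A: "A \<in> iso G G" and fx: "\<forall>g\<in>carrier G. (A ^^ 2) g = g \<longrightarrow> g = \<one>\<^bsub>G\<^esub>"
      using aut_from_L[OF G iso pos good] by auto
    show ?thesis
      by (rule core_apply[OF G fin A, of 2 k "M1 k" "M1 k" "Xs k"])
         (use fx M1_Z M1M1 M1_add Xs_fin Xs_sub X_cov1 T_per1 in auto)
  next
    assume c2: "\<forall>(p, r, d) \<in> set ds. p \<noteq> 2" and ev: "even k"
    obtain s where k: "k = 2 * s" using ev by blast
    define L where "L i = Lsc (-1)" for i :: nat
    have good: "goodL (L i) (mm ds i) (dd ds i) 3" if i: "i < length ds" for i
    proof -
      have p2: "fst (ds ! i) \<noteq> 2" using entry[OF i c2] by simp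
      have "coprime (mm ds i) ((-1) ^ 3 - 1)" unfolding mmE
        using cop[OF conjunct1[OF E[OF i]] not_dvd_m2[OF conjunct1[OF E[OF i]] p2]] by simp
      thus ?thesis by (simp add: L_def goodL_Lsc)
    qed
    obtain A where A: "A \<in> iso G G" and fx: "\<forall>g\<in>carrier G. (A ^^ 3) g = g \<longrightarrow> g = \<one>\<^bsub>G\<^esub>"
      using aut_from_L[OF G iso pos good] by auto
    show ?thesis
      by (rule core_apply[OF G fin A, of 3 k "M2 k" "Mi2 k" "Xs k"])
         (use fx M2_Z Mi2_Z MiM2[OF k] MMi2[OF k] M2_add Xs_fin Xs_sub X_cov2[OF k] T_per2[OF k] in auto)
  next
    fix s assume c3: "\<forall>(p, r, d) \<in> set ds. p = 2 \<longrightarrow> d \<ge> 2" and k: "k = 4 * s"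
    define L where "L i = (if fst (ds ! i) = 2 then Lb (dd ds i) else Lsc (-1))" for i
    have good: "goodL (L i) (mm ds i) (dd ds i) 5" if i: "i < length ds" for i
    proof (cases "fst (ds ! i) = 2")
      case True
      have d: "2 \<le> dd ds i" using entry[OF i c3] True by (simp add: dd_def)
      have "\<not> int (fst (ds ! i)) dvd 11" using True by simp
      hence "coprime (mm ds i) 11" unfolding mmE by (rule cop[OF conjunct1[OF E[OF i]]])
      thus ?thesis using True d by (simp add: L_def goodL_Lb)
    next
      case False
      have "coprime (mm ds i) ((-1) ^ 5 - 1)" unfolding mmE
        using cop[OF conjunct1[OF E[OF i]] not_dvd_m2[OF conjunct1[OF E[OF i]] False]] by simp
      thus ?thesis using False by (simp add: L_def goodL_Lsc)
    qed
    obtain A where A: "A \<in> iso G G" and fx: "\<forall>g\<in>carrier G. (A ^^ 5) g = g \<longrightarrow> g = \<one>\<^bsub>G\<^esub>"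
      using aut_from_L[OF G iso pos good] by auto
    show ?thesis
      by (rule core_apply[OF G fin A, of 5 k "M4 k" "Mi4 k" "Xs k"])
         (use fx M4_Z Mi4_Z MiM4[OF k] MMi4[OF k] M4_add Xs_fin Xs_sub X_cov4[OF k] T_per4[OF k] in auto)
  qed
qed


end
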